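(* Let $\rho>r>0$ and $(x_0,y_0,\theta_0)\in\mathbb{R}^2\times[0,2\pi]$, and consider the optimal control problem (OCP) of finding the minimum time $t_f>0$ such that there is a trajectory $(x(\cdot),y(\cdot),\theta(\cdot))$ on $[0,t_f]$ of $\dot x=\cos\theta$, $\dot y=\sin\theta$, $\dot\theta=u/\rho$, $u(t)\in[-1,1]$, with $(x(0),y(0),\theta(0))=(x_0,y_0,\theta_0)$, $x(t_f)^2+y(t_f)^2=r^2$ and $x(t_f)\cos\theta(t_f)+y(t_f)\sin\theta(t_f)=0$. Then a path of type $C_1C_2C_3$ (feasible for the OCP) in which the target circle is internally tangent to $C_3$ cannot be optimal, i.e. cannot be a solution path of the OCP.
   Context: The target circle is the circle of radius $r$ centered at the origin. Type $C_1C_2C_3$ means the path is a concatenation of three circular arcs of radius $\rho$ with alternating turning directions ($RLR$ or $LRL$, where $R$ is a right/clockwise turn and $L$ a left/counter-clockwise turn). "The target circle is internally tangent to $C_3$" means the target circle touches the circle of radius $\rho$ containing $C_3$ from inside it. *)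

theory Defs
  imports "HOL-Analysis.Analysis"
begin

definition admissible ::
  "real \<Rightarrow> real \<Rightarrow> real \<Rightarrow> real \<Rightarrow> real \<Rightarrow>
   (real \<Rightarrow> real) \<Rightarrow> (real \<Rightarrow> real) \<Rightarrow> (real \<Rightarrow> real) \<Rightarrow> (real \<Rightarrow> real) \<Rightarrow> bool" where
  "admissible \<rho> x0 y0 \<theta>0 tf u X Y \<Theta> \<longleftrightarrow>
     tf > 0 \<and> u integrable_on {0..tf} \<and> (\<forall>t\<in>{0..tf}. \<bar>u t\<bar> \<le> 1) \<and>
     (\<forall>t\<in>{0..tf}.
        \<Theta> t = \<theta>0 + integral {0..t} u / \<rho> \<and>
        X t = x0 + integral {0..t} (\<lambda>s. cos (\<Theta> s)) \<and>
        Y t = y0 + integral {0..t} (\<lambda>s. sin (\<Theta> s)))"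

definition feasible ::
  "real \<Rightarrow> real \<Rightarrow> real \<Rightarrow> real \<Rightarrow> real \<Rightarrow> real \<Rightarrow>
   (real \<Rightarrow> real) \<Rightarrow> (real \<Rightarrow> real) \<Rightarrow> (real \<Rightarrow> real) \<Rightarrow> (real \<Rightarrow> real) \<Rightarrow> bool" where
  "feasible \<rho> r x0 y0 \<theta>0 tf u X Y \<Theta> \<longleftrightarrow>
     admissible \<rho> x0 y0 \<theta>0 tf u X Y \<Theta> \<and>
     (X tf)\<^sup>2 + (Y tf)\<^sup>2 = r\<^sup>2 \<and>
     X tf * cos (\<Theta> tf) + Y tf * sin (\<Theta> tf) = 0"

definition optimal ::
  "real \<Rightarrow> real \<Rightarrow> real \<Rightarrow> real \<Rightarrow> real \<Rightarrow> real \<Rightarrow>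
   (real \<Rightarrow> real) \<Rightarrow> (real \<Rightarrow> real) \<Rightarrow> (real \<Rightarrow> real) \<Rightarrow> (real \<Rightarrow> real) \<Rightarrow> bool" where
  "optimal \<rho> r x0 y0 \<theta>0 tf u X Y \<Theta> \<longleftrightarrow>
     feasible \<rho> r x0 y0 \<theta>0 tf u X Y \<Theta> \<and>
     (\<forall>tf' u' X' Y' \<Theta>'. feasible \<rho> r x0 y0 \<theta>0 tf' u' X' Y' \<Theta>' \<longrightarrow> tf \<le> tf')"

text \<open>Path of type C1C2C3 on [0,tf]: three nondegenerate circular arcs with
  alternating turning directions (RLR for s = -1, LRL for s = 1); u = s means
  left (counter-clockwise) turning when s = 1.\<close>
definition CCC_control :: "real \<Rightarrow> real \<Rightarrow> real \<Rightarrow> real \<Rightarrow> (real \<Rightarrow> real) \<Rightarrow> bool" where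
  "CCC_control s t1 t2 tf u \<longleftrightarrow>
     (s = 1 \<or> s = -1) \<and> 0 < t1 \<and> t1 < t2 \<and> t2 < tf \<and>
     (\<forall>t\<in>{0..tf}. u t = (if t < t1 then s else if t < t2 then - s else s))"

definition turn_center :: "real \<Rightarrow> real \<Rightarrow> real \<Rightarrow> real \<Rightarrow> real \<Rightarrow> real \<times> real" where
  "turn_center \<rho> s x y \<theta> = (x - s * \<rho> * sin \<theta>, y + s * \<rho> * cos \<theta>)"

end

theory Submission
  imports Defs
begin


definition arc_d :: "real \<Rightarrow> real \<Rightarrow> real \<Rightarrow> real \<Rightarrow> complex" where
  "arc_d \<rho> \<theta> v d = (if v = 0 then of_real d * cis \<theta>
     else - \<i> * of_real (\<rho> / v) * (cis (\<theta> + v * d / \<rho>) - cis \<theta>))"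

lemma const_spike_integral:
  fixes u :: "real \<Rightarrow> real"
  assumes "a \<le> b" and "\<forall>t. a \<le> t \<and> t < b \<longrightarrow> u t = v"
  shows "(u has_integral (v * (b - a))) {a..b}"
proof -
  have h: "((\<lambda>t. v) has_integral (v * (b - a))) {a..b}"
    using has_integral_const_real[of v a b] assms(1) by (simp add: mult.commute)
  show ?thesis
    by (rule has_integral_spike_finite[where S="{b}", OF _ _ h]) (use assms(2) in auto)
qed

lemma arc_cos_integral:
  assumes rho: "\<rho> > 0" and ab: "a \<le> b"
  shows "((\<lambda>s. cos (A + v * (s - a) / \<rho>)) has_integral Re (arc_d \<rho> A v (b - a))) {a..b}"
proof (cases "v = 0")
  case True
  then show ?thesis
    using has_integral_const_real[of "cos A" a b] ab by (simp add: arc_d_def mult.commute)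
next
  case False
  have d1: "((\<lambda>s. \<rho> / v * sin (A + v * (s - a) / \<rho>)) has_vector_derivative
             cos (A + v * (x - a) / \<rho>)) (at x within {a..b})" for x
    using False rho
    by (auto intro!: derivative_eq_intros simp: has_real_derivative_iff_has_vector_derivative[symmetric])
  have e1: "Re (arc_d \<rho> A v (b - a)) = \<rho> / v * sin (A + v * (b - a) / \<rho>) - \<rho> / v * sin (A + v * (a - a) / \<rho>)"
    using False by (simp add: arc_d_def right_diff_distrib)
  show ?thesis
    unfolding e1 by (rule fundamental_theorem_of_calculus[OF ab]) (use d1 in auto)
qed

lemma arc_sin_integral:
  assumes rho: "\<rho> > 0" and ab: "a \<le> b"
  shows "((\<lambda>s. sin (A + v * (s - a) / \<rho>)) has_integral Im (arc_d \<rho> A v (b - a))) {a..b}"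
proof (cases "v = 0")
  case True
  then show ?thesis
    using has_integral_const_real[of "sin A" a b] ab by (simp add: arc_d_def mult.commute)
next
  case False
  have d2: "((\<lambda>s. - (\<rho> / v) * cos (A + v * (s - a) / \<rho>)) has_vector_derivative
             sin (A + v * (x - a) / \<rho>)) (at x within {a..b})" for x
    using False rho
    by (auto intro!: derivative_eq_intros simp: has_real_derivative_iff_has_vector_derivative[symmetric])
  have e2: "Im (arc_d \<rho> A v (b - a)) = - (\<rho> / v) * cos (A + v * (b - a) / \<rho>) - (- (\<rho> / v) * cos (A + v * (a - a) / \<rho>))"
    using False by (simp add: arc_d_def right_diff_distrib)
  show ?thesis
    unfolding e2 by (rule fundamental_theorem_of_calculus[OF ab]) (use d2 in auto)
qed

lemma seg_step:
  fixes u \<Theta> :: "real \<Rightarrow> real"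
  assumes rho: "\<rho> > 0" and ab: "0 \<le> a" "a \<le> b"
    and hu: "(u has_integral I) {0..a}"
    and hv: "\<forall>t. a \<le> t \<and> t < b \<longrightarrow> u t = v"
    and hT: "\<forall>t\<in>{0..b}. \<Theta> t = \<theta>0 + integral {0..t} u / \<rho>"
    and hX: "((\<lambda>s. cos (\<Theta> s)) has_integral IX) {0..a}"
    and hY: "((\<lambda>s. sin (\<Theta> s)) has_integral IY) {0..a}"
  shows "(u has_integral (I + v * (b - a))) {0..b}"
    and "\<Theta> b = \<Theta> a + v * (b - a) / \<rho>"
    and "((\<lambda>s. cos (\<Theta> s)) has_integral (IX + Re (arc_d \<rho> (\<Theta> a) v (b - a)))) {0..b}"
    and "((\<lambda>s. sin (\<Theta> s)) has_integral (IY + Im (arc_d \<rho> (\<Theta> a) v (b - a)))) {0..b}"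
proof -
  have gen: "(u has_integral (I + v * (t - a))) {0..t}" if "a \<le> t" "t \<le> b" for t
  proof -
    have "(u has_integral (v * (t - a))) {a..t}"
      using const_spike_integral[of a t u v] that hv by auto
    then show ?thesis using has_integral_combine[OF ab(1) that(1) hu] by simp
  qed
  show "(u has_integral (I + v * (b - a))) {0..b}" using gen[of b] ab by simp
  have thT: "\<Theta> t = \<Theta> a + v * (t - a) / \<rho>" if "a \<le> t" "t \<le> b" for t
  proof -
    have "\<Theta> t = \<theta>0 + (I + v * (t - a)) / \<rho>"
      using hT that ab gen[OF that] by (simp add: integral_unique)
    moreover have "\<Theta> a = \<theta>0 + I / \<rho>"
      using hT ab hu by (simp add: integral_unique)
    ultimately show ?thesis by (simp add: add_divide_distrib)
  qed
  show "\<Theta> b = \<Theta> a + v * (b - a) / \<rho>" using thT[of b] ab by simp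
  have cosI: "((\<lambda>s. cos (\<Theta> s)) has_integral Re (arc_d \<rho> (\<Theta> a) v (b - a))) {a..b}"
    by (rule has_integral_eq[OF _ arc_cos_integral[OF rho ab(2)]])
       (metis atLeastAtMost_iff thT)
  have sinI: "((\<lambda>s. sin (\<Theta> s)) has_integral Im (arc_d \<rho> (\<Theta> a) v (b - a))) {a..b}"
    by (rule has_integral_eq[OF _ arc_sin_integral[OF rho ab(2)]])
       (metis atLeastAtMost_iff thT)
  show "((\<lambda>s. cos (\<Theta> s)) has_integral (IX + Re (arc_d \<rho> (\<Theta> a) v (b - a)))) {0..b}"
    using has_integral_combine[OF ab hX cosI] by simp
  show "((\<lambda>s. sin (\<Theta> s)) has_integral (IY + Im (arc_d \<rho> (\<Theta> a) v (b - a)))) {0..b}"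
    using has_integral_combine[OF ab hY sinI] by simp
qed



definition pw4 :: "real \<Rightarrow> real \<Rightarrow> real \<Rightarrow> real \<Rightarrow> real \<Rightarrow> real \<Rightarrow> real \<Rightarrow> real \<Rightarrow> real" where
  "pw4 v1 v2 v3 v4 T1 T2 T3 t = (if t < T1 then v1 else if t < T2 then v2 else if t < T3 then v3 else v4)"

lemma path4:
  fixes u \<Theta> X Y :: "real \<Rightarrow> real"
  assumes rho: "\<rho> > 0" and d: "0 \<le> d1" "0 \<le> d2" "0 \<le> d3" "0 \<le> d4"
    and hu: "\<forall>t\<in>{0..d1+d2+d3+d4}. u t = pw4 v1 v2 v3 v4 d1 (d1+d2) (d1+d2+d3) t"
    and hT: "\<forall>t\<in>{0..d1+d2+d3+d4}. \<Theta> t = \<theta>0 + integral {0..t} u / \<rho>"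
    and hX: "\<forall>t\<in>{0..d1+d2+d3+d4}. X t = x0 + integral {0..t} (\<lambda>s. cos (\<Theta> s))"
    and hY: "\<forall>t\<in>{0..d1+d2+d3+d4}. Y t = y0 + integral {0..t} (\<lambda>s. sin (\<Theta> s))"
  defines "\<theta>1 \<equiv> \<theta>0 + v1 * d1 / \<rho>"
    and "\<theta>2 \<equiv> \<theta>0 + v1 * d1 / \<rho> + v2 * d2 / \<rho>"
    and "\<theta>3 \<equiv> \<theta>0 + v1 * d1 / \<rho> + v2 * d2 / \<rho> + v3 * d3 / \<rho>"
  shows "u integrable_on {0..d1+d2+d3+d4}"
    and "\<Theta> (d1+d2+d3+d4) = \<theta>0 + v1 * d1 / \<rho> + v2 * d2 / \<rho> + v3 * d3 / \<rho> + v4 * d4 / \<rho>"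
    and "X (d1+d2+d3+d4) = x0 + Re (arc_d \<rho> \<theta>0 v1 d1 + arc_d \<rho> \<theta>1 v2 d2 + arc_d \<rho> \<theta>2 v3 d3 + arc_d \<rho> \<theta>3 v4 d4)"
    and "Y (d1+d2+d3+d4) = y0 + Im (arc_d \<rho> \<theta>0 v1 d1 + arc_d \<rho> \<theta>1 v2 d2 + arc_d \<rho> \<theta>2 v3 d3 + arc_d \<rho> \<theta>3 v4 d4)"
proof -
  let ?T = "d1+d2+d3+d4"
  let ?cs = "\<lambda>s. cos (\<Theta> s)" and ?sn = "\<lambda>s. sin (\<Theta> s)"
  have T0: "\<Theta> 0 = \<theta>0" using hT d by auto
  have u0: "(u has_integral 0) {0..0}" by (rule has_integral_null_real) simp
  have c0: "(?cs has_integral 0) {0..0}" by (rule has_integral_null_real) simp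
  have s0: "(?sn has_integral 0) {0..0}" by (rule has_integral_null_real) simp
  have hT1: "\<forall>t\<in>{0..d1}. \<Theta> t = \<theta>0 + integral {0..t} u / \<rho>" using hT d by auto
  have hv1: "\<forall>t. 0 \<le> t \<and> t < d1 \<longrightarrow> u t = v1" using hu d by (auto simp: pw4_def)
  note S1 = seg_step[OF rho order_refl d(1) u0 _ hT1 c0 s0, simplified, OF hv1]
  have hT2: "\<forall>t\<in>{0..d1+d2}. \<Theta> t = \<theta>0 + integral {0..t} u / \<rho>" using hT d by auto
  have hv2: "\<forall>t. d1 \<le> t \<and> t < d1+d2 \<longrightarrow> u t = v2" using hu d by (auto simp: pw4_def)
  note S2 = seg_step[OF rho d(1) _ S1(1) hv2 hT2 S1(3) S1(4), simplified]
  have hT3: "\<forall>t\<in>{0..d1+d2+d3}. \<Theta> t = \<theta>0 + integral {0..t} u / \<rho>" using hT d by auto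
  have hv3: "\<forall>t. d1+d2 \<le> t \<and> t < d1+d2+d3 \<longrightarrow> u t = v3" using hu d by (auto simp: pw4_def)
  note S3 = seg_step[OF rho _ _ S2(1) hv3 hT3 S2(3) S2(4), simplified]
  have hv4: "\<forall>t. d1+d2+d3 \<le> t \<and> t < d1+d2+d3+d4 \<longrightarrow> u t = v4" using hu d by (auto simp: pw4_def)
  note S4 = seg_step[OF rho _ _ S3(1) hv4 hT S3(3) S3(4), simplified]
  show "u integrable_on {0..?T}" using S4(1) d by auto
  show "\<Theta> ?T = \<theta>0 + v1 * d1 / \<rho> + v2 * d2 / \<rho> + v3 * d3 / \<rho> + v4 * d4 / \<rho>"
    using S4(2) S3(2) S2(2) S1(2) T0 d by simp
  have th1: "\<Theta> d1 = \<theta>1" using S1(2) T0 by (simp add: \<theta>1_def)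
  have th2: "\<Theta> (d1+d2) = \<theta>2" using S2(2) th1 d by (simp add: \<theta>1_def \<theta>2_def)
  have th3: "\<Theta> (d1+d2+d3) = \<theta>3" using S3(2) th2 d by (simp add: \<theta>3_def \<theta>2_def)
  show "X ?T = x0 + Re (arc_d \<rho> \<theta>0 v1 d1 + arc_d \<rho> \<theta>1 v2 d2 + arc_d \<rho> \<theta>2 v3 d3 + arc_d \<rho> \<theta>3 v4 d4)"
    using S4(3) d hX th1 th2 th3 T0 by (simp add: integral_unique)
  show "Y ?T = y0 + Im (arc_d \<rho> \<theta>0 v1 d1 + arc_d \<rho> \<theta>1 v2 d2 + arc_d \<rho> \<theta>2 v3 d3 + arc_d \<rho> \<theta>3 v4 d4)"
    using S4(4) d hY th1 th2 th3 T0 by (simp add: integral_unique)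
qed



lemma mk_feasible:
  fixes \<rho> r x0 y0 \<theta>0 :: real
  assumes rho: "\<rho> > 0" and d: "0 \<le> d1" "0 \<le> d2" "0 \<le> d3" "0 \<le> d4" and T: "0 < d1+d2+d3+d4"
    and v: "\<bar>v1\<bar> \<le> 1" "\<bar>v2\<bar> \<le> 1" "\<bar>v3\<bar> \<le> 1" "\<bar>v4\<bar> \<le> 1"
  defines "\<theta>1 \<equiv> \<theta>0 + v1 * d1 / \<rho>"
    and "\<theta>2 \<equiv> \<theta>0 + v1 * d1 / \<rho> + v2 * d2 / \<rho>"
    and "\<theta>3 \<equiv> \<theta>0 + v1 * d1 / \<rho> + v2 * d2 / \<rho> + v3 * d3 / \<rho>"
    and "\<theta>4 \<equiv> \<theta>0 + v1 * d1 / \<rho> + v2 * d2 / \<rho> + v3 * d3 / \<rho> + v4 * d4 / \<rho>"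
    and "zf \<equiv> Complex x0 y0 + (arc_d \<rho> \<theta>0 v1 d1 + arc_d \<rho> (\<theta>0 + v1 * d1 / \<rho>) v2 d2
       + arc_d \<rho> (\<theta>0 + v1 * d1 / \<rho> + v2 * d2 / \<rho>) v3 d3
       + arc_d \<rho> (\<theta>0 + v1 * d1 / \<rho> + v2 * d2 / \<rho> + v3 * d3 / \<rho>) v4 d4)"
  assumes M1: "(Re zf)\<^sup>2 + (Im zf)\<^sup>2 = r\<^sup>2" and M2: "Re zf * cos \<theta>4 + Im zf * sin \<theta>4 = 0"
  shows "\<exists>u X Y \<Theta>. feasible \<rho> r x0 y0 \<theta>0 (d1+d2+d3+d4) u X Y \<Theta>"
proof -
  define u where "u = pw4 v1 v2 v3 v4 d1 (d1+d2) (d1+d2+d3)"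
  define \<Theta> where "\<Theta> = (\<lambda>t. \<theta>0 + integral {0..t} u / \<rho>)"
  define X where "X = (\<lambda>t. x0 + integral {0..t} (\<lambda>s. cos (\<Theta> s)))"
  define Y where "Y = (\<lambda>t. y0 + integral {0..t} (\<lambda>s. sin (\<Theta> s)))"
  have hu: "\<forall>t\<in>{0..d1+d2+d3+d4}. u t = pw4 v1 v2 v3 v4 d1 (d1+d2) (d1+d2+d3) t" by (simp add: u_def)
  have hT: "\<forall>t\<in>{0..d1+d2+d3+d4}. \<Theta> t = \<theta>0 + integral {0..t} u / \<rho>" by (simp add: \<Theta>_def)
  have hX: "\<forall>t\<in>{0..d1+d2+d3+d4}. X t = x0 + integral {0..t} (\<lambda>s. cos (\<Theta> s))" by (simp add: X_def)
  have hY: "\<forall>t\<in>{0..d1+d2+d3+d4}. Y t = y0 + integral {0..t} (\<lambda>s. sin (\<Theta> s))" by (simp add: Y_def)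
  note P = path4[OF rho d hu hT hX hY]
  have bnd: "\<forall>t\<in>{0..d1+d2+d3+d4}. \<bar>u t\<bar> \<le> 1" using v by (simp add: u_def pw4_def)
  have adm: "admissible \<rho> x0 y0 \<theta>0 (d1+d2+d3+d4) u X Y \<Theta>"
    unfolding admissible_def using T P(1) bnd hT hX hY by blast
  have eX: "X (d1+d2+d3+d4) = Re zf" using P(3) by (simp add: zf_def \<theta>1_def \<theta>2_def \<theta>3_def)
  have eY: "Y (d1+d2+d3+d4) = Im zf" using P(4) by (simp add: zf_def \<theta>1_def \<theta>2_def \<theta>3_def)
  have eT: "\<Theta> (d1+d2+d3+d4) = \<theta>4" using P(2) by (simp add: \<theta>4_def)
  have "feasible \<rho> r x0 y0 \<theta>0 (d1+d2+d3+d4) u X Y \<Theta>"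
    unfolding feasible_def using adm M1 M2 eX eY eT by simp
  then show ?thesis by blast
qed

lemma orig_path:
  fixes \<rho> r x0 y0 \<theta>0 tf t1 t2 :: real and u X Y \<Theta> :: "real \<Rightarrow> real"
  assumes rho: "\<rho> > 0" and adm: "admissible \<rho> x0 y0 \<theta>0 tf u X Y \<Theta>"
    and C: "CCC_control 1 t1 t2 tf u"
  shows "\<Theta> tf = \<theta>0 + t1 / \<rho> + (t1 - t2) / \<rho> + (tf - t2) / \<rho>"
    and "Complex (X tf) (Y tf) = Complex x0 y0 + (arc_d \<rho> \<theta>0 1 t1 + arc_d \<rho> (\<theta>0 + t1 / \<rho>) (-1) (t2 - t1)
          + arc_d \<rho> (\<theta>0 + t1 / \<rho> + (t1 - t2) / \<rho>) 1 (tf - t2))"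
proof -
  from C have t: "0 < t1" "t1 < t2" "t2 < tf"
    and uu: "\<forall>t\<in>{0..tf}. u t = (if t < t1 then 1 else if t < t2 then - 1 else 1)"
    unfolding CCC_control_def by auto
  have e: "t1 + (t2 - t1) + (tf - t2) + 0 = tf" by simp
  have hu: "\<forall>t\<in>{0..t1 + (t2 - t1) + (tf - t2) + 0}. u t = pw4 1 (-1) 1 1 t1 (t1 + (t2 - t1)) (t1 + (t2 - t1) + (tf - t2)) t"
    using uu by (simp add: pw4_def)
  from adm have hT: "\<forall>t\<in>{0..t1 + (t2 - t1) + (tf - t2) + 0}. \<Theta> t = \<theta>0 + integral {0..t} u / \<rho>"
    and hX: "\<forall>t\<in>{0..t1 + (t2 - t1) + (tf - t2) + 0}. X t = x0 + integral {0..t} (\<lambda>s. cos (\<Theta> s))"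
    and hY: "\<forall>t\<in>{0..t1 + (t2 - t1) + (tf - t2) + 0}. Y t = y0 + integral {0..t} (\<lambda>s. sin (\<Theta> s))"
    unfolding admissible_def by auto
  note P = path4[OF rho _ _ _ _ hu hT hX hY]
  have d: "0 \<le> t1" "0 \<le> t2 - t1" "0 \<le> tf - t2" "(0::real) \<le> 0" using t by auto
  note Q = P[OF d]
  have a4: "arc_d \<rho> a 1 0 = 0" for a by (simp add: arc_d_def)
  show "\<Theta> tf = \<theta>0 + t1 / \<rho> + (t1 - t2) / \<rho> + (tf - t2) / \<rho>"
    using Q(2) by simp
  show "Complex (X tf) (Y tf) = Complex x0 y0 + (arc_d \<rho> \<theta>0 1 t1 + arc_d \<rho> (\<theta>0 + t1 / \<rho>) (-1) (t2 - t1)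
          + arc_d \<rho> (\<theta>0 + t1 / \<rho> + (t1 - t2) / \<rho>) 1 (tf - t2))"
    using Q(3,4) by (simp add: a4 complex_eq_iff)
qed



lemma arc_d_L: "\<rho> > 0 \<Longrightarrow> arc_d \<rho> \<theta> 1 d = - \<i> * of_real \<rho> * (cis (\<theta> + d / \<rho>) - cis \<theta>)"
  by (simp add: arc_d_def)
lemma arc_d_R: "\<rho> > 0 \<Longrightarrow> arc_d \<rho> \<theta> (-1) d = \<i> * of_real \<rho> * (cis (\<theta> - d / \<rho>) - cis \<theta>)"
  by (simp add: arc_d_def)
lemma arc_d_S: "arc_d \<rho> \<theta> 0 d = of_real d * cis \<theta>"
  by (simp add: arc_d_def)

definition kom :: "real \<Rightarrow> real \<Rightarrow> real \<Rightarrow> real" where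
  "kom \<rho> r m = (m\<^sup>2 + 4 * \<rho>\<^sup>2 - (\<rho> + r)\<^sup>2) / (4 * \<rho> * m)"
definition kbe :: "real \<Rightarrow> real \<Rightarrow> real \<Rightarrow> real" where
  "kbe \<rho> r m = (2 * \<rho> - m * kom \<rho> r m) / (\<rho> + r)"

lemma kom_one_minus:
  assumes "\<rho> > 0" "m > 0"
  shows "1 - kom \<rho> r m = (m - (\<rho> - r)) * (3 * \<rho> + r - m) / (4 * \<rho> * m)"
  using assms by (simp add: kom_def field_simps power2_eq_square)

lemma kom_bounds:
  assumes "\<rho> > r" "r > 0" "\<rho> - r < m" "m < \<rho> + r"
  shows "-1 < kom \<rho> r m" "kom \<rho> r m < 1"
proof -
  have m: "m > 0" using assms by linarith
  have "1 + kom \<rho> r m = ((m + 2 * \<rho>)\<^sup>2 - (\<rho> + r)\<^sup>2) / (4 * \<rho> * m)"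
    using m assms by (simp add: kom_def field_simps power2_eq_square)
  moreover have "(m + 2 * \<rho>)\<^sup>2 - (\<rho> + r)\<^sup>2 > 0"
  proof -
    have "m + 2 * \<rho> > \<rho> + r" using assms by linarith
    moreover have "\<rho> + r > 0" using assms by linarith
    ultimately have "(\<rho> + r)\<^sup>2 < (m + 2 * \<rho>)\<^sup>2"
      by (intro power_strict_mono) auto
    then show ?thesis by simp
  qed
  ultimately show "-1 < kom \<rho> r m" using m assms
    by (smt (verit, best) divide_pos_pos mult_pos_pos)
  have "1 - kom \<rho> r m = (m - (\<rho> - r)) * (3 * \<rho> + r - m) / (4 * \<rho> * m)"
    using kom_one_minus[of \<rho> m r] m assms by simp
  moreover have "(m - (\<rho> - r)) * (3 * \<rho> + r - m) / (4 * \<rho> * m) > 0"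
    using m assms by (intro divide_pos_pos mult_pos_pos) auto
  ultimately show "kom \<rho> r m < 1" by linarith
qed

lemma kbe_facts:
  assumes "\<rho> > r" "r > 0" "\<rho> - r < m" "m < \<rho> + r"
  shows "(\<rho> + r)\<^sup>2 * (1 - (kbe \<rho> r m)\<^sup>2) = m\<^sup>2 * (1 - (kom \<rho> r m)\<^sup>2)"
    and "-1 \<le> kbe \<rho> r m" "kbe \<rho> r m \<le> 1"
proof -
  have m: "m > 0" using assms by linarith
  have rr: "\<rho> + r > 0" using assms by linarith
  have km: "4 * \<rho> * m * kom \<rho> r m = m\<^sup>2 + 4 * \<rho>\<^sup>2 - (\<rho> + r)\<^sup>2"
    using m assms by (simp add: kom_def)
  show eq: "(\<rho> + r)\<^sup>2 * (1 - (kbe \<rho> r m)\<^sup>2) = m\<^sup>2 * (1 - (kom \<rho> r m)\<^sup>2)"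
  proof -
    have kk: "kbe \<rho> r m * (\<rho> + r) = 2 * \<rho> - m * kom \<rho> r m"
      using rr by (simp add: kbe_def)
    have "(\<rho> + r)\<^sup>2 * (1 - (kbe \<rho> r m)\<^sup>2) = (\<rho> + r)\<^sup>2 - (kbe \<rho> r m * (\<rho> + r))\<^sup>2"
      by (simp add: power2_eq_square algebra_simps)
    also have "\<dots> = (\<rho> + r)\<^sup>2 - (2 * \<rho> - m * kom \<rho> r m)\<^sup>2" by (simp only: kk)
    finally have "(\<rho> + r)\<^sup>2 * (1 - (kbe \<rho> r m)\<^sup>2) = (\<rho> + r)\<^sup>2 - (2 * \<rho> - m * kom \<rho> r m)\<^sup>2" .
    also have "\<dots> = m\<^sup>2 * (1 - (kom \<rho> r m)\<^sup>2)"
      using km by (simp add: power2_eq_square algebra_simps)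
    finally show ?thesis .
  qed
  have "m\<^sup>2 * (1 - (kom \<rho> r m)\<^sup>2) \<ge> 0"
    using kom_bounds[OF assms] by (intro mult_nonneg_nonneg) (auto simp: abs_square_le_1 less_imp_le)
  then have "1 - (kbe \<rho> r m)\<^sup>2 \<ge> 0" using eq rr
    by (metis zero_le_mult_iff zero_less_power not_le)
  then have "\<bar>kbe \<rho> r m\<bar> \<le> 1" by (simp add: abs_square_le_1)
  then show "-1 \<le> kbe \<rho> r m" "kbe \<rho> r m \<le> 1" by auto
qed

lemma tail:
  fixes c' :: complex
  assumes rr: "\<rho> > r" "r > 0" and mdef: "m = cmod c'" and mb: "\<rho> - r < m" "m < \<rho> + r"
    and dir: "\<i> * cis \<theta>s * of_real m = c'"
  defines "\<omega> \<equiv> arccos (kom \<rho> r m)" and "\<beta> \<equiv> arccos (kbe \<rho> r m)"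
  shows "c' - 2 * \<i> * of_real \<rho> * cis (\<theta>s - \<omega>) + \<i> * of_real \<rho> * cis (\<theta>s - \<omega> - \<beta>)
          = - of_real r * \<i> * cis (\<theta>s - \<omega> - \<beta>)"
    and "0 < \<omega>" "\<omega> < pi" "0 < \<beta>"
proof -
  have m: "m > 0" using rr mb by linarith
  note kb = kom_bounds[OF rr mb] and kf = kbe_facts[OF rr mb]
  have co: "cos \<omega> = kom \<rho> r m" using kb by (simp add: \<omega>_def cos_arccos)
  have so: "sin \<omega> = sqrt (1 - (kom \<rho> r m)\<^sup>2)" using kb by (simp add: \<omega>_def sin_arccos_abs)
  have cb: "cos \<beta> = kbe \<rho> r m" using kf by (simp add: \<beta>_def cos_arccos)
  have sb: "sin \<beta> = sqrt (1 - (kbe \<rho> r m)\<^sup>2)" using kf by (simp add: \<beta>_def sin_arccos_abs)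
  have key: "(\<rho> + r) * sin \<beta> = m * sin \<omega>"
  proof -
    have "(\<rho> + r) * sin \<beta> = sqrt ((\<rho> + r)\<^sup>2 * (1 - (kbe \<rho> r m)\<^sup>2))"
      using rr by (simp add: sb real_sqrt_mult)
    also have "\<dots> = sqrt (m\<^sup>2 * (1 - (kom \<rho> r m)\<^sup>2))" using kf(1) by simp
    also have "\<dots> = m * sin \<omega>" using m by (simp add: so real_sqrt_mult)
    finally show ?thesis .
  qed
  have cbe: "(\<rho> + r) * cos \<beta> = 2 * \<rho> - m * cos \<omega>"
    using rr by (simp add: cb co kbe_def)
  have cq: "of_real (\<rho> + r) * cis (- \<beta>) = of_real (2 * \<rho>) - of_real m * cis \<omega>"
    by (rule complex_eqI) (use key cbe in \<open>simp_all\<close>)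
  have cc: "cis (- \<omega>) * cis \<omega> = 1" by (simp add: cis_mult)
  let ?a = "cis \<theta>s" and ?p = "cis (- \<omega>)" and ?q = "cis (- \<beta>)"
  have e1: "cis (\<theta>s - \<omega>) = ?a * ?p" by (simp add: cis_mult)
  have e2: "cis (\<theta>s - \<omega> - \<beta>) = ?a * ?p * ?q" by (simp add: cis_mult)
  have "c' - 2 * \<i> * of_real \<rho> * cis (\<theta>s - \<omega>) + \<i> * of_real \<rho> * cis (\<theta>s - \<omega> - \<beta>)
          + of_real r * \<i> * cis (\<theta>s - \<omega> - \<beta>)
        = \<i> * ?a * (of_real m - 2 * of_real \<rho> * ?p + ?p * (of_real (\<rho> + r) * ?q))"
    unfolding e1 e2 dir[symmetric] by (simp add: algebra_simps)
  also have "\<dots> = \<i> * ?a * (of_real m - 2 * of_real \<rho> * ?p + ?p * (of_real (2 * \<rho>) - of_real m * cis \<omega>))"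
    by (simp only: cq)
  also have "\<dots> = \<i> * ?a * (of_real m - of_real m * (?p * cis \<omega>))"
    by (simp add: algebra_simps)
  also have "\<dots> = 0" by (simp only: cc) simp
  finally show "c' - 2 * \<i> * of_real \<rho> * cis (\<theta>s - \<omega>) + \<i> * of_real \<rho> * cis (\<theta>s - \<omega> - \<beta>)
          = - of_real r * \<i> * cis (\<theta>s - \<omega> - \<beta>)"
    by (simp add: algebra_simps eq_neg_iff_add_eq_0)
  show "0 < \<omega>" using kb unfolding \<omega>_def
    using arccos_less_arccos[of "kom \<rho> r m" 1] by simp
  show "\<omega> < pi" using kb unfolding \<omega>_def
    using arccos_less_arccos[of "-1" "kom \<rho> r m"] by simp
  have "sin \<omega> > 0" using \<open>0 < \<omega>\<close> \<open>\<omega> < pi\<close> by (simp add: sin_gt_zero)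
  then have "(\<rho> + r) * sin \<beta> > 0" using key m by simp
  then have "sin \<beta> > 0" using rr by (simp add: zero_less_mult_iff)
  then show "0 < \<beta>" unfolding \<beta>_def using kf
    by (metis arccos_lbound le_less sin_zero)
qed

lemma cis_arctan_Re:
  fixes w :: complex
  assumes w: "Re w > 0"
  shows "cis (arctan (Im w / Re w)) = w / of_real (cmod w)"
proof -
  let ?x = "Im w / Re w"
  have s: "sqrt (1 + ?x\<^sup>2) = cmod w / Re w"
  proof -
    have "1 + ?x\<^sup>2 = ((Re w)\<^sup>2 + (Im w)\<^sup>2) / (Re w)\<^sup>2" using w by (simp add: field_simps)
    then have "sqrt (1 + ?x\<^sup>2) = sqrt ((Re w)\<^sup>2 + (Im w)\<^sup>2) / Re w"
      using w by (simp add: real_sqrt_divide)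
    then show ?thesis by (simp add: cmod_def)
  qed
  have wn: "cmod w > 0" using w complex_Re_le_cmod[of w] by linarith
  have c1: "cos (arctan ?x) = Re w / cmod w" using w wn by (simp add: cos_arctan s)
  have s1: "sin (arctan ?x) = Im w / cmod w" using w wn by (simp add: sin_arctan s)
  show ?thesis by (rule complex_eqI) (simp_all add: c1 s1)
qed

lemma delta_dir:
  fixes c c' :: complex
  assumes c: "\<i> * cis \<theta>f * of_real k = c" "k > 0"
    and w: "Re (c' / c) > 0"
  shows "\<i> * cis (\<theta>f + arctan (Im (c' / c) / Re (c' / c))) * of_real (cmod c') = c'"
proof -
  let ?w = "c' / c"
  let ?x = "Im ?w / Re ?w"
  have c0: "c \<noteq> 0" using c by auto
  have cm: "cmod c = k" using c(2) by (simp add: c(1)[symmetric] norm_mult)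
  have wn: "cmod ?w > 0" using w complex_Re_le_cmod[of ?w] by linarith
  have cd: "cis (arctan ?x) = ?w / of_real (cmod ?w)" using cis_arctan_Re[OF w] .
  have "cmod ?w = cmod c' / k" using cm by (simp add: norm_divide)
  then have e: "cmod c' = k * cmod ?w" using c(2) by simp
  have "\<i> * cis (\<theta>f + arctan ?x) * of_real (cmod c') = \<i> * cis \<theta>f * (?w / of_real (cmod ?w)) * (of_real k * of_real (cmod ?w))"
    by (simp add: cis_mult[symmetric] cd e)
  also have "\<dots> = (\<i> * cis \<theta>f * of_real k) * ?w"
    using wn by (simp add: field_simps)
  also have "\<dots> = c'" using c c0 by simp
  finally show ?thesis .
qed



lemma one_minus_cos_le: "1 - cos x \<le> x\<^sup>2 / 2" for x :: real
proof -
  have "cos x = 1 - 2 * (sin (x / 2))\<^sup>2" using cos_double_sin[of "x/2"] by simp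
  moreover have "(sin (x / 2))\<^sup>2 \<le> (x / 2)\<^sup>2"
    using abs_sin_x_le_abs_x[of "x/2"] by (metis abs_le_square_iff)
  ultimately show ?thesis by (simp add: power_divide)
qed

lemma cmod_cis_minus_1: "cmod (cis t - 1) \<le> \<bar>t\<bar>" for t :: real
proof -
  have "(cmod (cis t - 1))\<^sup>2 = (cos t - 1)\<^sup>2 + (sin t)\<^sup>2" by (simp add: cmod_power2)
  also have "\<dots> = 2 * (1 - cos t)" by (simp add: power2_eq_square algebra_simps sin_squared_eq)
  also have "\<dots> \<le> t\<^sup>2" using one_minus_cos_le[of t] by simp
  finally have "(cmod (cis t - 1))\<^sup>2 \<le> \<bar>t\<bar>\<^sup>2" by simp
  then show ?thesis by (rule power2_le_imp_le) simp
qed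

lemma sin_ge_half: fixes t :: real assumes "0 \<le> t" "t \<le> 1" shows "t / 2 \<le> sin t"
proof -
  have "(\<lambda>x. sin x - x / 2) 0 \<le> (\<lambda>x. sin x - x / 2) t"
  proof (rule DERIV_nonneg_imp_nondecreasing[where f="\<lambda>x. sin x - x / 2", OF assms(1)])
    fix x assume x: "0 \<le> x" "x \<le> t"
    have "DERIV (\<lambda>x. sin x - x / 2) x :> cos x - 1 / 2"
      by (auto intro!: derivative_eq_intros)
    moreover have "cos x - 1 / 2 \<ge> 0"
    proof -
      have "x\<^sup>2 \<le> 1" using x assms by (simp add: power_le_one)
      then show ?thesis using one_minus_cos_le[of x] by simp
    qed
    ultimately show "\<exists>y. DERIV (\<lambda>x. sin x - x / 2) x :> y \<and> y \<ge> 0" by blast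
  qed
  then show ?thesis by simp
qed

lemma sin_sub_le: "sin a - sin b \<le> \<bar>a - b\<bar>" for a b :: real
proof -
  have "sin a - sin b = 2 * sin ((a - b) / 2) * cos ((a + b) / 2)" by (rule sin_diff_sin)
  also have "\<dots> \<le> 2 * \<bar>sin ((a - b) / 2)\<bar> * \<bar>cos ((a + b) / 2)\<bar>"
    by (metis abs_ge_self abs_mult abs_of_pos mult.assoc zero_less_numeral)
  also have "\<dots> \<le> 2 * \<bar>(a - b) / 2\<bar> * 1"
    by (intro mult_mono abs_sin_x_le_abs_x) auto
  finally show ?thesis by simp
qed

lemma sin_beta_omega:
  assumes rr: "\<rho> > r" "r > 0" and mb: "\<rho> - r < m" "m < \<rho> + r"
  shows "(\<rho> + r) * sin (arccos (kbe \<rho> r m)) = m * sin (arccos (kom \<rho> r m))"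
proof -
  have m: "m > 0" using rr mb by linarith
  note kb = kom_bounds[OF rr mb] and kf = kbe_facts[OF rr mb]
  have "(\<rho> + r) * sin (arccos (kbe \<rho> r m)) = sqrt ((\<rho> + r)\<^sup>2 * (1 - (kbe \<rho> r m)\<^sup>2))"
    using rr kf(2,3) by (simp add: sin_arccos_abs real_sqrt_mult)
  also have "\<dots> = sqrt (m\<^sup>2 * (1 - (kom \<rho> r m)\<^sup>2))" using kf(1) by simp
  also have "\<dots> = m * sin (arccos (kom \<rho> r m))" using m kb by (simp add: sin_arccos_abs real_sqrt_mult)
  finally show ?thesis .
qed



definition cpr :: "real \<Rightarrow> complex \<Rightarrow> complex \<Rightarrow> real \<Rightarrow> complex" where
  "cpr \<rho> c V \<tau> = c + 2 * \<i> * of_real \<rho> * (cis \<tau> - 1) * V"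
definition dl :: "complex \<Rightarrow> complex \<Rightarrow> real" where
  "dl c c' = arctan (Im (c' / c) / Re (c' / c))"

lemma cmod_add_sq: "(cmod (c + d))\<^sup>2 = (cmod c)\<^sup>2 + 2 * Re (cnj c * d) + (cmod d)\<^sup>2"
  unfolding cmod_power2 by (simp add: power2_eq_square algebra_simps)

lemma div_lower:
  fixes x y z Y :: real
  assumes "z \<le> x * y" "0 < y" "y \<le> Y" "0 \<le> x"
  shows "z / Y \<le> x"
proof -
  have "x * y \<le> x * Y" using assms by (intro mult_left_mono) auto
  then have "z \<le> x * Y" using assms(1) by linarith
  then show ?thesis using assms by (simp add: divide_le_eq)
qed

lemma gain:
  fixes \<rho> r E K :: real and c V :: complex
  assumes rr: "\<rho> > r" "r > 0" and cm: "cmod c = \<rho> - r"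
    and B0: "Im (cnj c * \<i> * V) \<noteq> 0" and E: "E > 0" and K: "K \<ge> 0"
  shows "\<exists>\<tau>. \<tau> \<noteq> 0 \<and> \<bar>\<tau>\<bar> < E \<and>
     \<rho> - r < cmod (cpr \<rho> c V \<tau>) \<and> cmod (cpr \<rho> c V \<tau>) < \<rho> + r \<and>
     Re (cpr \<rho> c V \<tau> / c) > 0 \<and>
     arccos (kom \<rho> r (cmod (cpr \<rho> c V \<tau>))) < E \<and> \<bar>dl c (cpr \<rho> c V \<tau>)\<bar> < E \<and>
     K * \<bar>\<tau>\<bar> + \<rho> * \<bar>dl c (cpr \<rho> c V \<tau>)\<bar>
       < \<rho> * (arccos (kom \<rho> r (cmod (cpr \<rho> c V \<tau>))) - arccos (kbe \<rho> r (cmod (cpr \<rho> c V \<tau>))))"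
proof -
  define W where "W = cnj c * \<i> * V"
  define A where "A = Re W"
  define B where "B = Im W"
  define nV where "nV = cmod V"
  define K' where "K' = K + 4 * \<rho>\<^sup>2 * nV / (\<rho> - r) + 1"
  define q0 where "q0 = \<rho> * r\<^sup>2 * \<bar>B\<bar> / (4 * (\<rho> + r)\<^sup>2 * K'\<^sup>2)"
  define E2 where "E2 = min E (pi / 2)"
  define Dm where "Dm = min (min r ((\<rho> - r) / 2)) (min ((\<rho> - r) * (1 - cos E2) / 2) ((\<rho> - r) * E / 4))"
  define t where "t = min (min 1 (E / 2)) (min (\<bar>B\<bar> / (2 * (\<bar>A\<bar> + 1))) (min (Dm / (2 * \<rho> * (nV + 1))) (q0 / 2)))"
  define \<tau> where "\<tau> = (if B > 0 then - t else t)"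
  define c' where "c' = cpr \<rho> c V \<tau>"
  define m where "m = cmod c'"
  define D where "D = cmod (c' - c)"
  have rho: "\<rho> > 0" and rmr: "\<rho> - r > 0" using rr by auto
  have nV0: "nV \<ge> 0" by (simp add: nV_def)
  have K'1: "K' \<ge> 1" using K rho rmr nV0 by (simp add: K'_def)
  have Bp: "\<bar>B\<bar> > 0" using B0 by (simp add: B_def W_def)
  have q0p: "q0 > 0" using rho rr Bp K'1 by (simp add: q0_def)
  have E2p: "E2 > 0" "E2 \<le> pi / 2" "E2 \<le> E" using E by (auto simp: E2_def)
  have cE2: "cos E2 < 1"
  proof -
    have "0 \<le> E2" "E2 \<le> pi" using E2p pi_gt_zero by linarith+
    then have "cos E2 < cos 0 \<longleftrightarrow> 0 < E2" using cos_mono_less_eq[of E2 0] by simp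
    then show ?thesis using E2p by simp
  qed
  have Dmp: "Dm > 0" using rr rmr cE2 E by (simp add: Dm_def)
  have tp: "t > 0" using E Bp Dmp rho nV0 q0p by (simp add: t_def)
  have t1: "t \<le> 1" "t \<le> E / 2" "t \<le> \<bar>B\<bar> / (2 * (\<bar>A\<bar> + 1))"
       "t \<le> Dm / (2 * \<rho> * (nV + 1))" "t \<le> q0 / 2" unfolding t_def
    by (meson min.cobounded1 min.cobounded2 order_trans)+
  have at: "\<bar>\<tau>\<bar> = t" using tp by (simp add: \<tau>_def)
  have tne: "\<tau> \<noteq> 0" using tp by (simp add: \<tau>_def)
  have Bs: "- B * sin \<tau> = \<bar>B\<bar> * sin t" by (simp add: \<tau>_def)
  have Dle: "D \<le> 2 * \<rho> * nV * t"
  proof -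
    have "c' - c = 2 * \<i> * of_real \<rho> * (cis \<tau> - 1) * V" by (simp add: c'_def cpr_def)
    then have "D = 2 * \<rho> * cmod (cis \<tau> - 1) * nV" using rho by (simp add: D_def nV_def norm_mult)
    also have "\<dots> \<le> 2 * \<rho> * t * nV"
      using cmod_cis_minus_1[of \<tau>] at rho nV0 by (intro mult_right_mono mult_left_mono) auto
    finally show ?thesis by (simp add: mult.commute mult.left_commute)
  qed
  have DDm: "D \<le> Dm"
  proof -
    have "2 * \<rho> * nV * t \<le> 2 * \<rho> * (nV + 1) * t" using rho tp by (simp add: mult_right_mono)
    also have "\<dots> \<le> (2 * \<rho> * (nV + 1)) * (Dm / (2 * \<rho> * (nV + 1)))" using t1(4) rho nV0 by (intro mult_left_mono) auto
    also have "\<dots> = Dm"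
    proof -
      have "2 * \<rho> * (nV + 1) \<noteq> 0" using rho nV0 by simp
      then show ?thesis by simp
    qed
    finally show ?thesis using Dle by linarith
  qed
  have Dm1: "Dm \<le> r" "Dm \<le> (\<rho> - r) / 2" "Dm \<le> (\<rho> - r) * (1 - cos E2) / 2" "Dm \<le> (\<rho> - r) * E / 4"
    unfolding Dm_def by (meson min.cobounded1 min.cobounded2 order_trans)+
  have D0: "D \<ge> 0" by (simp add: D_def)
  have msq: "m\<^sup>2 = (\<rho> - r)\<^sup>2 + 4 * \<rho> * (A * (cos \<tau> - 1) - B * sin \<tau>) + D\<^sup>2"
  proof -
    have cc: "c' = c + (c' - c)" by simp
    have "Re (cnj c * (c' - c)) = 2 * \<rho> * (A * (cos \<tau> - 1) - B * sin \<tau>)"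
      by (simp add: c'_def cpr_def A_def B_def W_def algebra_simps)
    then show ?thesis using cmod_add_sq[of c "c' - c"] cm by (simp add: m_def D_def)
  qed
  have Alow: "A * (cos \<tau> - 1) \<ge> - \<bar>A\<bar> * (t\<^sup>2 / 2)"
  proof -
    have h: "0 \<le> 1 - cos \<tau>" "1 - cos \<tau> \<le> t\<^sup>2 / 2" using one_minus_cos_le[of \<tau>] at by auto
    have "A * (cos \<tau> - 1) \<ge> - \<bar>A\<bar> * (1 - cos \<tau>)"
      using h by (cases "A \<ge> 0") (auto simp: algebra_simps mult_left_mono)
    moreover have "\<bar>A\<bar> * (1 - cos \<tau>) \<le> \<bar>A\<bar> * (t\<^sup>2 / 2)" by (rule mult_left_mono) (use h in auto)
    ultimately show ?thesis by linarith
  qed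
  have sinlow: "sin t \<ge> t / 2" using sin_ge_half[of t] tp t1 by simp
  have At: "\<bar>A\<bar> * t \<le> \<bar>B\<bar> / 2"
  proof -
    have "\<bar>A\<bar> * t \<le> (\<bar>A\<bar> + 1) * t" using tp by (simp add: mult_right_mono)
    also have "\<dots> \<le> (\<bar>A\<bar> + 1) * (\<bar>B\<bar> / (2 * (\<bar>A\<bar> + 1)))" using t1(3) by (intro mult_left_mono) auto
    also have "\<dots> = \<bar>B\<bar> / 2"
    proof -
      have "\<bar>A\<bar> + 1 \<noteq> 0" using abs_ge_zero[of A] by linarith
      then show ?thesis by (simp add: field_simps)
    qed
    finally show ?thesis .
  qed
  have msq_low: "m\<^sup>2 - (\<rho> - r)\<^sup>2 \<ge> \<rho> * \<bar>B\<bar> * t"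
  proof -
    have "\<bar>B\<bar> * sin t \<ge> \<bar>B\<bar> * (t / 2)" using sinlow Bp by (simp add: mult_left_mono)
    moreover have "\<bar>A\<bar> * (t\<^sup>2 / 2) \<le> \<bar>B\<bar> * t / 4"
    proof -
      have "\<bar>A\<bar> * (t\<^sup>2 / 2) = (\<bar>A\<bar> * t) * t / 2" by (simp add: power2_eq_square)
      also have "\<dots> \<le> (\<bar>B\<bar> / 2) * t / 2" by (intro divide_right_mono mult_right_mono) (use At tp in auto)
      finally show ?thesis by simp
    qed
    ultimately have "A * (cos \<tau> - 1) - B * sin \<tau> \<ge> \<bar>B\<bar> * t / 4" using Alow Bs by linarith
    then have "4 * \<rho> * (A * (cos \<tau> - 1) - B * sin \<tau>) \<ge> 4 * \<rho> * (\<bar>B\<bar> * t / 4)"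
      using rho by (intro mult_left_mono) auto
    then have "4 * \<rho> * (A * (cos \<tau> - 1) - B * sin \<tau>) \<ge> \<rho> * \<bar>B\<bar> * t" by simp
    then show ?thesis using msq zero_le_power2[of D] by linarith
  qed
  have mge: "m > \<rho> - r"
  proof -
    have "\<rho> * \<bar>B\<bar> * t > 0" using rho Bp tp by simp
    then have "(\<rho> - r)\<^sup>2 < m\<^sup>2" using msq_low by linarith
    moreover have "m \<ge> 0" by (simp add: m_def)
    ultimately show ?thesis by (rule power_less_imp_less_base)
  qed
  have mle: "m \<le> \<rho>"
  proof -
    have "m \<le> cmod c + D" unfolding m_def D_def by (metis norm_triangle_sub)
    then show ?thesis using cm DDm Dm1 by linarith
  qed
  have mp: "m > 0" using mge rmr by linarith
  have mlt: "m < \<rho> + r" using mle rr by linarith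
  have mdiff_low: "m - (\<rho> - r) \<ge> \<bar>B\<bar> * t / 2"
  proof -
    have "\<rho> * \<bar>B\<bar> * t \<le> (m - (\<rho> - r)) * (m + (\<rho> - r))"
      using msq_low by (simp add: power2_eq_square algebra_simps)
    then have "\<rho> * \<bar>B\<bar> * t / (2 * \<rho>) \<le> m - (\<rho> - r)"
      by (rule div_lower) (use mge mle rmr rr in auto)
    then show ?thesis using rho by simp
  qed
  have mdiff_up: "m - (\<rho> - r) \<le> D"
  proof -
    have "m \<le> cmod c + D" unfolding m_def D_def by (metis norm_triangle_sub)
    then show ?thesis using cm by linarith
  qed
  have k1: "1 - kom \<rho> r m = (m - (\<rho> - r)) * (3 * \<rho> + r - m) / (4 * \<rho> * m)"
    using kom_one_minus[OF rho mp] .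
  have kom_low: "1 - kom \<rho> r m \<ge> \<bar>B\<bar> * t / (4 * \<rho>)"
  proof -
    have "(\<bar>B\<bar> * t / 2) * (2 * \<rho>) \<le> (m - (\<rho> - r)) * (3 * \<rho> + r - m)"
      using mdiff_low mle mge rr Bp tp by (intro mult_mono) auto
    moreover have "4 * \<rho> * m \<le> 4 * \<rho> * \<rho>" using mle rho by simp
    ultimately have "(\<bar>B\<bar> * t / 2) * (2 * \<rho>) / (4 * \<rho> * \<rho>) \<le> (m - (\<rho> - r)) * (3 * \<rho> + r - m) / (4 * \<rho> * m)"
      using mp rho Bp tp mle mge rr by (intro frac_le) auto
    then show ?thesis using k1 rho by (simp add: power2_eq_square)
  qed
  have kom_up: "1 - kom \<rho> r m \<le> D / (\<rho> - r)"
  proof -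
    have "(m - (\<rho> - r)) * (3 * \<rho> + r - m) \<le> D * (4 * \<rho>)"
      using mdiff_up mge mle rr D0 by (intro mult_mono) auto
    moreover have "4 * \<rho> * (\<rho> - r) \<le> 4 * \<rho> * m" using mge rho by simp
    ultimately have "(m - (\<rho> - r)) * (3 * \<rho> + r - m) / (4 * \<rho> * m) \<le> D * (4 * \<rho>) / (4 * \<rho> * (\<rho> - r))"
      using mp rho rmr D0 mge mle rr by (intro frac_le) auto
    then show ?thesis using k1 rho by simp
  qed
  note kb = kom_bounds[OF rr mge mlt] and kf = kbe_facts[OF rr mge mlt]
  have kom_half: "kom \<rho> r m \<ge> 1 / 2"
  proof -
    have "D / (\<rho> - r) \<le> 1 / 2" using DDm Dm1 rmr by (simp add: divide_le_eq)
    then show ?thesis using kom_up by linarith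
  qed
  define \<omega> where "\<omega> = arccos (kom \<rho> r m)"
  define \<beta> where "\<beta> = arccos (kbe \<rho> r m)"
  have co: "cos \<omega> = kom \<rho> r m" using kb by (simp add: \<omega>_def cos_arccos)
  have om1: "0 \<le> \<omega>" unfolding \<omega>_def by (rule arccos_lbound) (use kb in auto)
  have om2: "\<omega> \<le> pi / 2" unfolding \<omega>_def by (rule arccos_le_pi2) (use kb kom_half in auto)
  note om = om1 om2
  have omp: "0 < \<omega>" using kb unfolding \<omega>_def using arccos_less_arccos[of "kom \<rho> r m" 1] by simp
  have omE: "\<omega> < E2"
  proof -
    have "D / (\<rho> - r) \<le> (1 - cos E2) / 2" using DDm Dm1 rmr by (simp add: divide_le_eq mult.commute)
    with kom_up have "1 - kom \<rho> r m \<le> (1 - cos E2) / 2" by (rule order_trans)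
    then have "cos E2 < cos \<omega>" using co cE2 by argo
    moreover have "cos E2 < cos \<omega> \<longleftrightarrow> \<omega> < E2"
      by (rule cos_mono_less_eq) (use om E2p pi_gt_zero in auto)
    ultimately show ?thesis by simp
  qed
  have so: "sin \<omega> = sqrt (1 - (kom \<rho> r m)\<^sup>2)" using kb by (simp add: \<omega>_def sin_arccos_abs)
  have so_low: "sin \<omega> \<ge> sqrt (\<bar>B\<bar> * t / (4 * \<rho>))"
  proof -
    have "1 - (kom \<rho> r m)\<^sup>2 = (1 - kom \<rho> r m) * (1 + kom \<rho> r m)" by (simp add: power2_eq_square algebra_simps)
    also have "\<dots> \<ge> (1 - kom \<rho> r m) * 1" using kb kom_half by (intro mult_left_mono) auto
    finally have "1 - (kom \<rho> r m)\<^sup>2 \<ge> \<bar>B\<bar> * t / (4 * \<rho>)" using kom_low by argo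
    then show ?thesis using so by (simp add: real_sqrt_le_mono)
  qed
  have sop: "sin \<omega> > 0" using omp om pi_gt_zero by (intro sin_gt_zero) auto
  have kbe0: "kbe \<rho> r m \<ge> 0"
  proof -
    have "m * kom \<rho> r m \<le> m * 1" using kb mp by (intro mult_left_mono) auto
    then have "2 * \<rho> - m * kom \<rho> r m \<ge> 0" using mle rho by linarith
    moreover have "\<rho> + r > 0" using rr by linarith
    ultimately show ?thesis by (simp add: kbe_def)
  qed
  have be1: "0 \<le> \<beta>" unfolding \<beta>_def by (rule arccos_lbound) (use kf in auto)
  have be2: "\<beta> \<le> pi / 2" unfolding \<beta>_def by (rule arccos_le_pi2) (use kf kbe0 in auto)
  note be = be1 be2
  have sbo: "(\<rho> + r) * sin \<beta> = m * sin \<omega>" unfolding \<beta>_def \<omega>_def by (rule sin_beta_omega[OF rr mge mlt])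
  have sdiff: "sin \<omega> - sin \<beta> \<ge> sin \<omega> * r / (\<rho> + r)"
  proof -
    have "sin \<beta> = m * sin \<omega> / (\<rho> + r)" using sbo rr by (simp add: field_simps)
    then have "sin \<omega> - sin \<beta> = sin \<omega> * (\<rho> + r - m) / (\<rho> + r)" using rr by (simp add: field_simps)
    moreover have "sin \<omega> * (\<rho> + r - m) \<ge> sin \<omega> * r" using mle sop by (intro mult_left_mono) auto
    ultimately show ?thesis using rr by (simp add: divide_right_mono)
  qed
  have blt: "\<beta> < \<omega>"
  proof (rule ccontr)
    assume "\<not> \<beta> < \<omega>"
    then have "sin \<omega> \<le> sin \<beta>" using om be pi_gt_zero by (intro sin_monotone_2pi_le) auto
    moreover have "sin \<omega> * r / (\<rho> + r) > 0" using sop rr by simp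
    ultimately show False using sdiff by linarith
  qed
  have gainlow: "\<omega> - \<beta> \<ge> r / (\<rho> + r) * sqrt (\<bar>B\<bar> * t / (4 * \<rho>))"
  proof -
    have "sin \<omega> - sin \<beta> \<le> \<omega> - \<beta>" using sin_sub_le[of \<omega> \<beta>] blt by simp
    moreover have "sin \<omega> * r / (\<rho> + r) \<ge> sqrt (\<bar>B\<bar> * t / (4 * \<rho>)) * r / (\<rho> + r)"
      by (intro divide_right_mono mult_right_mono) (use so_low rr in auto)
    moreover have "r / (\<rho> + r) * sqrt (\<bar>B\<bar> * t / (4 * \<rho>)) = sqrt (\<bar>B\<bar> * t / (4 * \<rho>)) * r / (\<rho> + r)"
      by simp
    ultimately show ?thesis using sdiff by linarith
  qed
  define w where "w = c' / c"
  have c0: "c \<noteq> 0" using cm rmr by auto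
  have w1: "cmod (w - 1) = D / (\<rho> - r)"
  proof -
    have "w - 1 = (c' - c) / c" using c0 by (simp add: w_def field_simps)
    then show ?thesis by (simp add: norm_divide D_def cm)
  qed
  have w1h: "cmod (w - 1) \<le> 1 / 2" using w1 DDm Dm1 rmr by (simp add: divide_le_eq)
  have Rew: "Re w \<ge> 1 / 2"
  proof -
    have "\<bar>Re (w - 1)\<bar> \<le> cmod (w - 1)" by (rule abs_Re_le_cmod)
    moreover have "Re (w - 1) = Re w - 1" by simp
    ultimately show ?thesis using w1h by linarith
  qed
  have Imw: "\<bar>Im w\<bar> \<le> D / (\<rho> - r)"
  proof -
    have "\<bar>Im (w - 1)\<bar> \<le> cmod (w - 1)" by (rule abs_Im_le_cmod)
    moreover have "Im (w - 1) = Im w" by simp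
    ultimately show ?thesis using w1 by simp
  qed
  have dlb: "\<bar>dl c c'\<bar> \<le> 2 * D / (\<rho> - r)"
  proof -
    have "\<bar>dl c c'\<bar> \<le> \<bar>Im w / Re w\<bar>" unfolding dl_def w_def[symmetric] by (rule abs_arctan_le)
    also have "\<dots> = \<bar>Im w\<bar> / Re w" using Rew by simp
    also have "\<dots> \<le> (D / (\<rho> - r)) / (1 / 2)" using Imw Rew D0 rmr by (intro frac_le) auto
    also have "\<dots> = 2 * D / (\<rho> - r)" by simp
    finally show ?thesis .
  qed
  have dlE: "\<bar>dl c c'\<bar> < E"
  proof -
    have "2 * D / (\<rho> - r) \<le> 2 * ((\<rho> - r) * E / 4) / (\<rho> - r)"
    proof (rule divide_right_mono)
      show "2 * D \<le> 2 * ((\<rho> - r) * E / 4)" using DDm Dm1(4) by linarith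
    qed (use rmr in auto)
    also have "\<dots> = E / 2"
    proof -
      have "\<rho> - r \<noteq> 0" using rmr by simp
      then show ?thesis by (simp add: field_simps)
    qed
    finally show ?thesis using dlb E by linarith
  qed
  have lhs: "K * \<bar>\<tau>\<bar> + \<rho> * \<bar>dl c c'\<bar> < K' * t"
  proof -
    have "\<rho> * \<bar>dl c c'\<bar> \<le> \<rho> * (2 * D / (\<rho> - r))" by (rule mult_left_mono) (use dlb rho in auto)
    also have "\<dots> \<le> \<rho> * (2 * (2 * \<rho> * nV * t) / (\<rho> - r))"
      using Dle rho rmr by (intro mult_left_mono divide_right_mono) auto
    also have "\<dots> = 4 * \<rho>\<^sup>2 * nV / (\<rho> - r) * t" by (simp add: power2_eq_square mult_ac)
    finally have a: "\<rho> * \<bar>dl c c'\<bar> \<le> 4 * \<rho>\<^sup>2 * nV / (\<rho> - r) * t" .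
    have "K' * t = K * t + 4 * \<rho>\<^sup>2 * nV / (\<rho> - r) * t + t" by (simp add: K'_def distrib_right)
    moreover have "K * \<bar>\<tau>\<bar> = K * t" by (simp add: at)
    ultimately show ?thesis using a tp by linarith
  qed
  have rhs: "K' * t \<le> \<rho> * (r / (\<rho> + r) * sqrt (\<bar>B\<bar> * t / (4 * \<rho>)))"
  proof -
    have "(K' * t)\<^sup>2 = K'\<^sup>2 * t * t" by (simp add: power2_eq_square)
    also have "\<dots> \<le> K'\<^sup>2 * t * q0" using t1(5) q0p tp by (intro mult_left_mono) auto
    also have "\<dots> = (\<rho> * (r / (\<rho> + r)))\<^sup>2 * (\<bar>B\<bar> * t / (4 * \<rho>))"
    proof -
      have "K' \<noteq> 0" "\<rho> + r \<noteq> 0" "\<rho> \<noteq> 0" using K'1 rho rr by auto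
      then show ?thesis by (simp add: q0_def field_simps power_mult_distrib power_divide) (simp add: power2_eq_square)
    qed
    finally have "(K' * t)\<^sup>2 \<le> (\<rho> * (r / (\<rho> + r)))\<^sup>2 * (\<bar>B\<bar> * t / (4 * \<rho>))" .
    then have "sqrt ((K' * t)\<^sup>2) \<le> sqrt ((\<rho> * (r / (\<rho> + r)))\<^sup>2 * (\<bar>B\<bar> * t / (4 * \<rho>)))"
      by (rule real_sqrt_le_mono)
    moreover have "sqrt ((K' * t)\<^sup>2) = K' * t" using K'1 tp by simp
    moreover have "sqrt ((\<rho> * (r / (\<rho> + r)))\<^sup>2 * (\<bar>B\<bar> * t / (4 * \<rho>))) = \<rho> * (r / (\<rho> + r)) * sqrt (\<bar>B\<bar> * t / (4 * \<rho>))"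
    proof -
      have a0: "\<rho> * (r / (\<rho> + r)) \<ge> 0" using rho rr by simp
      show ?thesis by (simp only: real_sqrt_mult real_sqrt_abs abs_of_nonneg[OF a0])
    qed
    ultimately show ?thesis by simp
  qed
  have fin: "K * \<bar>\<tau>\<bar> + \<rho> * \<bar>dl c c'\<bar> < \<rho> * (\<omega> - \<beta>)"
  proof -
    have "\<rho> * (r / (\<rho> + r) * sqrt (\<bar>B\<bar> * t / (4 * \<rho>))) \<le> \<rho> * (\<omega> - \<beta>)"
      by (rule mult_left_mono) (use gainlow rho in auto)
    then show ?thesis using lhs rhs by linarith
  qed
  have Rew0: "Re (c' / c) > 0" using Rew by (simp add: w_def)
  show ?thesis
    apply (rule exI[of _ \<tau>])
    using tne at t1 E mge mlt Rew0 omE E2p dlE fin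
    by (simp add: c'_def[symmetric] m_def[symmetric] \<omega>_def[symmetric] \<beta>_def[symmetric])
qed



lemma mk_feasible2:
  fixes \<rho> r x0 y0 \<theta>0 :: real
  assumes rho: "\<rho> > 0" and d: "0 \<le> d1" "0 \<le> d2" "0 \<le> d3" "0 \<le> d4" and T: "0 < d1+d2+d3+d4"
    and v: "\<bar>v1\<bar> \<le> 1" "\<bar>v2\<bar> \<le> 1" "\<bar>v3\<bar> \<le> 1" "\<bar>v4\<bar> \<le> 1"
    and p: "\<psi>1 = \<theta>0 + v1 * d1 / \<rho>" "\<psi>2 = \<psi>1 + v2 * d2 / \<rho>" "\<psi>3 = \<psi>2 + v3 * d3 / \<rho>"
       "\<psi>4 = \<psi>3 + v4 * d4 / \<rho>"
    and z: "zf = Complex x0 y0 + (arc_d \<rho> \<theta>0 v1 d1 + arc_d \<rho> \<psi>1 v2 d2 + arc_d \<rho> \<psi>2 v3 d3 + arc_d \<rho> \<psi>3 v4 d4)"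
    and M1: "(Re zf)\<^sup>2 + (Im zf)\<^sup>2 = r\<^sup>2" and M2: "Re zf * cos \<psi>4 + Im zf * sin \<psi>4 = 0"
  shows "\<exists>u X Y \<Theta>. feasible \<rho> r x0 y0 \<theta>0 (d1+d2+d3+d4) u X Y \<Theta>"
  by (rule mk_feasible[OF rho d T v]) (use M1 M2 in \<open>simp_all add: z p add.assoc\<close>)

lemma M_of:
  assumes "z = of_real a * \<i> * cis \<psi>" "\<bar>a\<bar> = r"
  shows "(Re z)\<^sup>2 + (Im z)\<^sup>2 = r\<^sup>2" "Re z * cos \<psi> + Im z * sin \<psi> = 0"
proof -
  have re: "Re z = - a * sin \<psi>" and im: "Im z = a * cos \<psi>" using assms(1) by simp_all
  have "(Re z)\<^sup>2 + (Im z)\<^sup>2 = a\<^sup>2 * (sin \<psi>)\<^sup>2 + a\<^sup>2 * (cos \<psi>)\<^sup>2"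
    by (simp add: re im power_mult_distrib)
  also have "\<dots> = a\<^sup>2 * ((sin \<psi>)\<^sup>2 + (cos \<psi>)\<^sup>2)" by (simp only: distrib_left)
  also have "\<dots> = a\<^sup>2" by (simp only: sin_cos_squared_add mult_1_right)
  also have "\<dots> = r\<^sup>2" using assms(2) by (metis power2_abs)
  finally show "(Re z)\<^sup>2 + (Im z)\<^sup>2 = r\<^sup>2" .
  show "Re z * cos \<psi> + Im z * sin \<psi> = 0" by (simp add: re im algebra_simps)
qed

lemma lrlr_feasible:
  fixes \<rho> r x0 y0 \<theta>0 :: real
  assumes rho: "\<rho> > 0" and r: "r \<ge> 0" and d: "0 \<le> d1" "0 \<le> d2" "0 \<le> d3" "0 \<le> d4" and T: "0 < d1+d2+d3+d4"
    and p: "\<psi>1 = \<theta>0 + d1 / \<rho>" "\<psi>2 = \<psi>1 - d2 / \<rho>" "\<psi>3 = \<psi>2 + d3 / \<rho>" "\<psi>4 = \<psi>3 - d4 / \<rho>"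
    and e: "Complex x0 y0 + \<i> * of_real \<rho> * cis \<theta>0 - 2 * \<i> * of_real \<rho> * cis \<psi>1 + 2 * \<i> * of_real \<rho> * cis \<psi>2
            - 2 * \<i> * of_real \<rho> * cis \<psi>3 + \<i> * of_real \<rho> * cis \<psi>4 = - of_real r * \<i> * cis \<psi>4"
  shows "\<exists>u X Y \<Theta>. feasible \<rho> r x0 y0 \<theta>0 (d1+d2+d3+d4) u X Y \<Theta>"
proof -
  define zf where "zf = Complex x0 y0 + (arc_d \<rho> \<theta>0 1 d1 + arc_d \<rho> \<psi>1 (-1) d2 + arc_d \<rho> \<psi>2 1 d3 + arc_d \<rho> \<psi>3 (-1) d4)"
  have a1: "arc_d \<rho> \<theta>0 1 d1 = - \<i> * of_real \<rho> * (cis \<psi>1 - cis \<theta>0)" using rho p by (simp add: arc_d_def)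
  have a2: "arc_d \<rho> \<psi>1 (-1) d2 = \<i> * of_real \<rho> * (cis \<psi>2 - cis \<psi>1)" using rho p by (simp add: arc_d_def)
  have a3: "arc_d \<rho> \<psi>2 1 d3 = - \<i> * of_real \<rho> * (cis \<psi>3 - cis \<psi>2)" using rho p by (simp add: arc_d_def)
  have a4: "arc_d \<rho> \<psi>3 (-1) d4 = \<i> * of_real \<rho> * (cis \<psi>4 - cis \<psi>3)" using rho p by (simp add: arc_d_def)
  have "zf = Complex x0 y0 + \<i> * of_real \<rho> * cis \<theta>0 - 2 * \<i> * of_real \<rho> * cis \<psi>1 + 2 * \<i> * of_real \<rho> * cis \<psi>2
            - 2 * \<i> * of_real \<rho> * cis \<psi>3 + \<i> * of_real \<rho> * cis \<psi>4"
    unfolding zf_def a1 a2 a3 a4 by (simp add: algebra_simps)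
  then have zf: "zf = of_real (- r) * \<i> * cis \<psi>4" using e by simp
  note M = M_of[OF zf, of r]
  show ?thesis
    by (rule mk_feasible2[where ?v1.0 = 1 and ?v2.0 = "-1" and ?v3.0 = 1 and ?v4.0 = "-1", OF rho d T _ _ _ _ _ _ _ _ zf_def])
       (use p M r in auto)
qed

lemma end_geom:
  fixes zf :: complex
  assumes rr: "\<rho> > r" "r > 0"
    and M1: "(Re zf)\<^sup>2 + (Im zf)\<^sup>2 = r\<^sup>2" and M2: "Re zf * cos \<phi> + Im zf * sin \<phi> = 0"
    and N: "(Re zf - \<rho> * sin \<phi>)\<^sup>2 + (Im zf + \<rho> * cos \<phi>)\<^sup>2 = (\<rho> - r)\<^sup>2"
  shows "zf = - of_real r * \<i> * cis \<phi>"
proof -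
  define a where "a = Re zf"
  define b where "b = Im zf"
  define C where "C = cos \<phi>"
  define S where "S = sin \<phi>"
  define l where "l = - a * S + b * C"
  have CS: "C\<^sup>2 + S\<^sup>2 = 1" by (simp add: C_def S_def)
  have h0: "a * C + b * S = 0" using M2 by (simp add: a_def b_def C_def S_def)
  have ha: "a = - l * S"
  proof -
    have "a = a * (C\<^sup>2 + S\<^sup>2)" using CS by simp
    also have "\<dots> = C * (a * C + b * S) - l * S" by (simp add: l_def power2_eq_square algebra_simps)
    finally show ?thesis using h0 by simp
  qed
  have hb: "b = l * C"
  proof -
    have "b = b * (C\<^sup>2 + S\<^sup>2)" using CS by simp
    also have "\<dots> = S * (a * C + b * S) + l * C" by (simp add: l_def power2_eq_square algebra_simps)
    finally show ?thesis using h0 by simp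
  qed
  have l2: "l\<^sup>2 = r\<^sup>2"
  proof -
    have "r\<^sup>2 = a\<^sup>2 + b\<^sup>2" using M1 by (simp add: a_def b_def)
    also have "\<dots> = l\<^sup>2 * (C\<^sup>2 + S\<^sup>2)" by (simp add: ha hb power_mult_distrib algebra_simps)
    finally show ?thesis using CS by simp
  qed
  have n2: "(l + \<rho>)\<^sup>2 = (\<rho> - r)\<^sup>2"
  proof -
    have "(\<rho> - r)\<^sup>2 = (a - \<rho> * S)\<^sup>2 + (b + \<rho> * C)\<^sup>2" using N by (simp add: a_def b_def C_def S_def)
    also have "\<dots> = (l + \<rho>)\<^sup>2 * (C\<^sup>2 + S\<^sup>2)" by (simp add: ha hb power2_eq_square algebra_simps)
    finally show ?thesis using CS by simp
  qed
  have lr: "l = - r"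
  proof -
    have "l = r \<or> l = - r" using l2 by (metis power2_eq_iff)
    moreover have "l \<noteq> r"
    proof
      assume "l = r"
      then have "(r + \<rho>)\<^sup>2 = (\<rho> - r)\<^sup>2" using n2 by simp
      then have "4 * r * \<rho> = 0" by (simp add: power2_eq_square algebra_simps)
      then show False using rr by simp
    qed
    ultimately show ?thesis by blast
  qed
  show ?thesis
    by (rule complex_eqI) (simp_all add: a_def[symmetric] b_def[symmetric] ha hb lr C_def S_def)
qed



lemma cis_plus_2pi: "cis (x + 2 * pi) = cis x"
  by (rule complex_eqI) (simp_all add: sin_periodic cos_periodic)
lemma cis_minus_2pi: "cis (x - 2 * pi) = cis x"
  using cis_plus_2pi[of "x - 2 * pi"] by simp

lemma im_cnj_prod: "Im (cnj (\<i> * of_real k * cis a) * \<i> * cis b) = k * sin (b - a)"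
  by (simp add: sin_diff algebra_simps)

lemma im_cnj_prod2: "Im (cnj (\<i> * of_real k * cis a) * \<i> * (cis b - cis e)) = k * (sin (b - a) - sin (e - a))"
  by (simp add: sin_diff algebra_simps)

lemma orig_setup:
  fixes \<rho> r x0 y0 \<theta>0 tf t1 t2 :: real and u X Y \<Theta> :: "real \<Rightarrow> real"
  assumes rr: "\<rho> > r" "r > 0" and F: "feasible \<rho> r x0 y0 \<theta>0 tf u X Y \<Theta>"
    and C: "CCC_control 1 t1 t2 tf u"
    and N: "norm (turn_center \<rho> 1 (X tf) (Y tf) (\<Theta> tf)) = \<rho> - r"
  shows "Complex x0 y0 + \<i> * of_real \<rho> * cis \<theta>0 - 2 * \<i> * of_real \<rho> * cis (\<theta>0 + t1 / \<rho>)
           + 2 * \<i> * of_real \<rho> * cis (\<theta>0 + t1 / \<rho> - (t2 - t1) / \<rho>)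
         = \<i> * of_real (\<rho> - r) * cis (\<theta>0 + t1 / \<rho> - (t2 - t1) / \<rho> + (tf - t2) / \<rho>)"
proof -
  have rho: "\<rho> > 0" using rr by linarith
  define \<phi>1 where "\<phi>1 = \<theta>0 + t1 / \<rho>"
  define \<phi>2 where "\<phi>2 = \<phi>1 - (t2 - t1) / \<rho>"
  define \<phi>f where "\<phi>f = \<phi>2 + (tf - t2) / \<rho>"
  from F have adm: "admissible \<rho> x0 y0 \<theta>0 tf u X Y \<Theta>"
    and M1: "(X tf)\<^sup>2 + (Y tf)\<^sup>2 = r\<^sup>2" and M2: "X tf * cos (\<Theta> tf) + Y tf * sin (\<Theta> tf) = 0"
    unfolding feasible_def by auto
  note O = orig_path[OF rho adm C]
  have e1: "\<theta>0 + t1 / \<rho> + (t1 - t2) / \<rho> = \<phi>2" by (simp add: \<phi>1_def \<phi>2_def diff_divide_distrib)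
  have Tf: "\<Theta> tf = \<phi>f" using O(1) e1 by (simp add: \<phi>f_def)
  define zf where "zf = Complex (X tf) (Y tf)"
  have a1: "arc_d \<rho> \<theta>0 1 t1 = - \<i> * of_real \<rho> * (cis \<phi>1 - cis \<theta>0)" using rho by (simp add: arc_d_def \<phi>1_def)
  have a2: "arc_d \<rho> (\<theta>0 + t1 / \<rho>) (-1) (t2 - t1) = \<i> * of_real \<rho> * (cis \<phi>2 - cis \<phi>1)"
    using rho e1 by (simp add: arc_d_def \<phi>1_def)
  have a3: "arc_d \<rho> (\<theta>0 + t1 / \<rho> + (t1 - t2) / \<rho>) 1 (tf - t2) = - \<i> * of_real \<rho> * (cis \<phi>f - cis \<phi>2)"
    using rho unfolding e1 by (simp add: arc_d_def \<phi>f_def)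
  have zfe: "zf = Complex x0 y0 + \<i> * of_real \<rho> * cis \<theta>0 - 2 * \<i> * of_real \<rho> * cis \<phi>1
           + 2 * \<i> * of_real \<rho> * cis \<phi>2 - \<i> * of_real \<rho> * cis \<phi>f"
    using O(2) unfolding zf_def[symmetric] a1 a2 a3 by (simp add: algebra_simps)
  have N2: "(Re zf - \<rho> * sin \<phi>f)\<^sup>2 + (Im zf + \<rho> * cos \<phi>f)\<^sup>2 = (\<rho> - r)\<^sup>2"
  proof -
    have "sqrt ((Re zf - \<rho> * sin \<phi>f)\<^sup>2 + (Im zf + \<rho> * cos \<phi>f)\<^sup>2) = \<rho> - r"
      using N Tf by (simp add: turn_center_def norm_Pair zf_def)
    then show ?thesis using rr
      by (metis real_sqrt_ge_zero real_sqrt_pow2 add_nonneg_nonneg zero_le_power2)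
  qed
  have zfr: "zf = - of_real r * \<i> * cis \<phi>f"
    by (rule end_geom[OF rr _ _ N2]) (use M1 M2 Tf in \<open>simp_all add: zf_def\<close>)
  have "Complex x0 y0 + \<i> * of_real \<rho> * cis \<theta>0 - 2 * \<i> * of_real \<rho> * cis \<phi>1 + 2 * \<i> * of_real \<rho> * cis \<phi>2
        = zf + \<i> * of_real \<rho> * cis \<phi>f" using zfe by simp
  also have "\<dots> = \<i> * of_real (\<rho> - r) * cis \<phi>f" using zfr by (simp add: algebra_simps)
  finally show ?thesis by (simp add: \<phi>1_def \<phi>2_def \<phi>f_def)
qed



lemma lrlr_combine:
  "P - 2 * \<i> * of_real \<rho> * cis a + 2 * \<i> * of_real \<rho> * cis b = c \<Longrightarrow>
   P - 2 * \<i> * of_real \<rho> * cis a + 2 * \<i> * of_real \<rho> * cis b - 2 * \<i> * of_real \<rho> * cis x + \<i> * of_real \<rho> * cis y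
   = c - 2 * \<i> * of_real \<rho> * cis x + \<i> * of_real \<rho> * cis y"
  by simp

lemma caseA:
  fixes \<rho> r x0 y0 \<theta>0 tf t1 t2 :: real
  assumes rr: "\<rho> > r" "r > 0" and t: "0 < t1" "t1 < t2" "t2 < tf"
    and hc: "Complex x0 y0 + \<i> * of_real \<rho> * cis \<theta>0 - 2 * \<i> * of_real \<rho> * cis (\<theta>0 + t1 / \<rho>)
           + 2 * \<i> * of_real \<rho> * cis (\<theta>0 + t1 / \<rho> - (t2 - t1) / \<rho>)
         = \<i> * of_real (\<rho> - r) * cis (\<theta>0 + t1 / \<rho> - (t2 - t1) / \<rho> + (tf - t2) / \<rho>)"
    and A: "tf - t2 \<ge> 2 * pi * \<rho>"
  shows "\<exists>T u X Y \<Theta>. feasible \<rho> r x0 y0 \<theta>0 T u X Y \<Theta> \<and> T < tf"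
proof -
  have rho: "\<rho> > 0" using rr by linarith
  define \<phi>1 where "\<phi>1 = \<theta>0 + t1 / \<rho>"
  define \<phi>2 where "\<phi>2 = \<phi>1 - (t2 - t1) / \<rho>"
  define \<phi>f where "\<phi>f = \<phi>2 + (tf - t2) / \<rho>"
  define L0 where "L0 = Complex x0 y0 + \<i> * of_real \<rho> * cis \<theta>0"
  have hc': "L0 - 2 * \<i> * of_real \<rho> * cis \<phi>1 + 2 * \<i> * of_real \<rho> * cis \<phi>2 = \<i> * of_real (\<rho> - r) * cis \<phi>f"
    using hc by (simp add: L0_def \<phi>1_def \<phi>2_def \<phi>f_def)
  have ex: "\<exists>u X Y \<Theta>. feasible \<rho> r x0 y0 \<theta>0 (t1 + (t2 - t1) + (tf - t2 - 2 * pi * \<rho>) + 0) u X Y \<Theta>"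
  proof (rule lrlr_feasible[OF rho _ _ _ _ _ _ _ _ _ _ _, where ?\<psi>1.0 = \<phi>1 and ?\<psi>2.0 = \<phi>2
          and ?\<psi>3.0 = "\<phi>f - 2 * pi" and ?\<psi>4.0 = "\<phi>f - 2 * pi"])
    show "Complex x0 y0 + \<i> * of_real \<rho> * cis \<theta>0 - 2 * \<i> * of_real \<rho> * cis \<phi>1 + 2 * \<i> * of_real \<rho> * cis \<phi>2
          - 2 * \<i> * of_real \<rho> * cis (\<phi>f - 2 * pi) + \<i> * of_real \<rho> * cis (\<phi>f - 2 * pi)
          = - of_real r * \<i> * cis (\<phi>f - 2 * pi)"
      unfolding L0_def[symmetric] lrlr_combine[OF hc'] cis_minus_2pi by (simp add: algebra_simps)
    show "\<phi>f - 2 * pi = \<phi>2 + (tf - t2 - 2 * pi * \<rho>) / \<rho>"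
      using rho by (simp add: \<phi>f_def diff_divide_distrib)
  qed (use t A rr in \<open>auto simp: \<phi>1_def \<phi>2_def\<close>)
  then obtain u X Y \<Theta> where "feasible \<rho> r x0 y0 \<theta>0 (t1 + (t2 - t1) + (tf - t2 - 2 * pi * \<rho>) + 0) u X Y \<Theta>" by blast
  moreover have "t1 + (t2 - t1) + (tf - t2 - 2 * pi * \<rho>) + 0 < tf" using rho pi_gt_zero by simp
  ultimately show ?thesis by blast
qed

lemma caseB:
  fixes \<rho> r x0 y0 \<theta>0 tf t1 t2 :: real
  assumes rr: "\<rho> > r" "r > 0" and t: "0 < t1" "t1 < t2" "t2 < tf"
    and hc: "Complex x0 y0 + \<i> * of_real \<rho> * cis \<theta>0 - 2 * \<i> * of_real \<rho> * cis (\<theta>0 + t1 / \<rho>)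
           + 2 * \<i> * of_real \<rho> * cis (\<theta>0 + t1 / \<rho> - (t2 - t1) / \<rho>)
         = \<i> * of_real (\<rho> - r) * cis (\<theta>0 + t1 / \<rho> - (t2 - t1) / \<rho> + (tf - t2) / \<rho>)"
    and B: "t2 - t1 \<ge> 2 * pi * \<rho>"
  shows "\<exists>T u X Y \<Theta>. feasible \<rho> r x0 y0 \<theta>0 T u X Y \<Theta> \<and> T < tf"
proof -
  have rho: "\<rho> > 0" using rr by linarith
  define \<phi>1 where "\<phi>1 = \<theta>0 + t1 / \<rho>"
  define \<phi>2 where "\<phi>2 = \<phi>1 - (t2 - t1) / \<rho>"
  define \<phi>f where "\<phi>f = \<phi>2 + (tf - t2) / \<rho>"
  define L0 where "L0 = Complex x0 y0 + \<i> * of_real \<rho> * cis \<theta>0"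
  have hc': "L0 - 2 * \<i> * of_real \<rho> * cis \<phi>1 + 2 * \<i> * of_real \<rho> * cis \<phi>2 = \<i> * of_real (\<rho> - r) * cis \<phi>f"
    using hc by (simp add: L0_def \<phi>1_def \<phi>2_def \<phi>f_def)
  have hc2: "L0 - 2 * \<i> * of_real \<rho> * cis \<phi>1 + 2 * \<i> * of_real \<rho> * cis (\<phi>2 + 2 * pi) = \<i> * of_real (\<rho> - r) * cis \<phi>f"
    using hc' by (simp only: cis_plus_2pi)
  have ex: "\<exists>u X Y \<Theta>. feasible \<rho> r x0 y0 \<theta>0 (t1 + (t2 - t1 - 2 * pi * \<rho>) + (tf - t2) + 0) u X Y \<Theta>"
  proof (rule lrlr_feasible[OF rho _ _ _ _ _ _ _ _ _ _ _, where ?\<psi>1.0 = \<phi>1 and ?\<psi>2.0 = "\<phi>2 + 2 * pi"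
          and ?\<psi>3.0 = "\<phi>f + 2 * pi" and ?\<psi>4.0 = "\<phi>f + 2 * pi"])
    show "Complex x0 y0 + \<i> * of_real \<rho> * cis \<theta>0 - 2 * \<i> * of_real \<rho> * cis \<phi>1 + 2 * \<i> * of_real \<rho> * cis (\<phi>2 + 2 * pi)
          - 2 * \<i> * of_real \<rho> * cis (\<phi>f + 2 * pi) + \<i> * of_real \<rho> * cis (\<phi>f + 2 * pi)
          = - of_real r * \<i> * cis (\<phi>f + 2 * pi)"
      unfolding L0_def[symmetric] cis_plus_2pi unfolding lrlr_combine[OF hc'] by (simp add: algebra_simps)
    show "\<phi>2 + 2 * pi = \<phi>1 - (t2 - t1 - 2 * pi * \<rho>) / \<rho>"
      using rho by (simp add: \<phi>2_def diff_divide_distrib)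
    show "\<phi>f + 2 * pi = \<phi>2 + 2 * pi + (tf - t2) / \<rho>"
      by (simp add: \<phi>f_def)
  qed (use t B rr in \<open>auto simp: \<phi>1_def\<close>)
  then obtain u X Y \<Theta> where "feasible \<rho> r x0 y0 \<theta>0 (t1 + (t2 - t1 - 2 * pi * \<rho>) + (tf - t2) + 0) u X Y \<Theta>" by blast
  moreover have "t1 + (t2 - t1 - 2 * pi * \<rho>) + (tf - t2) + 0 < tf" using rho pi_gt_zero by simp
  ultimately show ?thesis by blast
qed



lemma sin_ne0: "0 < x \<Longrightarrow> x < 2 * pi \<Longrightarrow> x \<noteq> pi \<Longrightarrow> sin x \<noteq> 0" for x :: real
proof -
  assume a: "0 < x" "x < 2 * pi" "x \<noteq> pi"
  show "sin x \<noteq> 0"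
  proof (cases "x < pi")
    case True then show ?thesis using a sin_gt_zero by force
  next
    case False then have "pi < x" using a by simp
    then show ?thesis using a sin_lt_zero by force
  qed
qed

lemma caseC:
  fixes \<rho> r x0 y0 \<theta>0 tf t1 t2 :: real
  assumes rr: "\<rho> > r" "r > 0" and t: "0 < t1" "t1 < t2" "t2 < tf"
    and hc: "Complex x0 y0 + \<i> * of_real \<rho> * cis \<theta>0 - 2 * \<i> * of_real \<rho> * cis (\<theta>0 + t1 / \<rho>)
           + 2 * \<i> * of_real \<rho> * cis (\<theta>0 + t1 / \<rho> - (t2 - t1) / \<rho>)
         = \<i> * of_real (\<rho> - r) * cis (\<theta>0 + t1 / \<rho> - (t2 - t1) / \<rho> + (tf - t2) / \<rho>)"
    and C1: "tf - t2 < 2 * pi * \<rho>" and C2: "tf - t2 \<noteq> pi * \<rho>"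
  shows "\<exists>T u X Y \<Theta>. feasible \<rho> r x0 y0 \<theta>0 T u X Y \<Theta> \<and> T < tf"
proof -
  have rho: "\<rho> > 0" using rr by linarith
  define \<phi>1 where "\<phi>1 = \<theta>0 + t1 / \<rho>"
  define \<phi>2 where "\<phi>2 = \<phi>1 - (t2 - t1) / \<rho>"
  define \<alpha>3 where "\<alpha>3 = (tf - t2) / \<rho>"
  define \<phi>f where "\<phi>f = \<phi>2 + \<alpha>3"
  define L0 where "L0 = Complex x0 y0 + \<i> * of_real \<rho> * cis \<theta>0"
  define c0 where "c0 = \<i> * of_real (\<rho> - r) * cis \<phi>f"
  have hc': "L0 - 2 * \<i> * of_real \<rho> * cis \<phi>1 + 2 * \<i> * of_real \<rho> * cis \<phi>2 = c0"
    using hc by (simp add: L0_def \<phi>1_def \<phi>2_def \<phi>f_def \<alpha>3_def c0_def)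
  have a3: "0 < \<alpha>3" "\<alpha>3 < 2 * pi" "\<alpha>3 \<noteq> pi"
    using t C1 C2 rho by (auto simp: \<alpha>3_def divide_less_eq field_simps)
  have cm: "cmod c0 = \<rho> - r" using rr by (simp add: c0_def norm_mult del: of_real_diff)
  define V where "V = cis \<phi>2"
  have B0: "Im (cnj c0 * \<i> * V) \<noteq> 0"
  proof -
    have "Im (cnj c0 * \<i> * V) = (\<rho> - r) * sin (\<phi>2 - \<phi>f)" unfolding c0_def V_def by (rule im_cnj_prod)
    also have "\<dots> = - (\<rho> - r) * sin \<alpha>3" by (simp add: \<phi>f_def algebra_simps)
    finally show ?thesis using sin_ne0[OF a3] rr by simp
  qed
  define E where "E = min (\<alpha>3 / 3) ((t2 - t1) / \<rho>)"
  have E0: "E > 0" using a3 t rho by (simp add: E_def)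
  obtain \<tau> where g: "\<tau> \<noteq> 0" "\<bar>\<tau>\<bar> < E"
     "\<rho> - r < cmod (cpr \<rho> c0 V \<tau>)" "cmod (cpr \<rho> c0 V \<tau>) < \<rho> + r"
     "Re (cpr \<rho> c0 V \<tau> / c0) > 0"
     "arccos (kom \<rho> r (cmod (cpr \<rho> c0 V \<tau>))) < E" "\<bar>dl c0 (cpr \<rho> c0 V \<tau>)\<bar> < E"
     "2 * \<rho> * \<bar>\<tau>\<bar> + \<rho> * \<bar>dl c0 (cpr \<rho> c0 V \<tau>)\<bar>
       < \<rho> * (arccos (kom \<rho> r (cmod (cpr \<rho> c0 V \<tau>))) - arccos (kbe \<rho> r (cmod (cpr \<rho> c0 V \<tau>))))"
    using gain[OF rr cm B0 E0, of "2 * \<rho>"] rho by auto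
  define c' where "c' = cpr \<rho> c0 V \<tau>"
  define m where "m = cmod c'"
  define \<delta> where "\<delta> = dl c0 c'"
  define \<omega> where "\<omega> = arccos (kom \<rho> r m)"
  define \<beta> where "\<beta> = arccos (kbe \<rho> r m)"
  define \<theta>s where "\<theta>s = \<phi>f + \<delta>"
  note g = g[folded c'_def, folded m_def, folded \<delta>_def \<omega>_def \<beta>_def]
  have dir: "\<i> * cis \<theta>s * of_real m = c'"
  proof -
    have "\<i> * cis \<phi>f * of_real (\<rho> - r) = c0" by (simp add: c0_def mult_ac)
    from delta_dir[OF this _ g(5)] rr show ?thesis by (simp add: \<theta>s_def \<delta>_def dl_def m_def)
  qed
  note TL = tail[OF rr m_def g(3) g(4) dir, folded \<omega>_def \<beta>_def]
  define d2 where "d2 = t2 - t1 - \<rho> * \<tau>"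
  define d3 where "d3 = \<rho> * (\<alpha>3 + \<delta> - \<omega> - \<tau>)"
  define d4 where "d4 = \<rho> * \<beta>"
  have E1: "E \<le> \<alpha>3 / 3" "E \<le> (t2 - t1) / \<rho>" unfolding E_def by (rule min.cobounded1, rule min.cobounded2)
  have d2p: "d2 > 0"
  proof -
    have "\<rho> * \<bar>\<tau>\<bar> < \<rho> * ((t2 - t1) / \<rho>)" using g(2) E1 rho by (intro mult_strict_left_mono) auto
    then have "\<rho> * \<bar>\<tau>\<bar> < t2 - t1" using rho by simp
    moreover have "\<rho> * \<tau> \<le> \<rho> * \<bar>\<tau>\<bar>" using rho by (intro mult_left_mono) auto
    ultimately show ?thesis by (simp add: d2_def)
  qed
  have d3p: "d3 > 0"
  proof -
    have "\<alpha>3 + \<delta> - \<omega> - \<tau> > 0" using g(2,6,7) E1 by linarith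
    then show ?thesis using rho by (simp add: d3_def)
  qed
  have d4p: "d4 \<ge> 0" using TL(4) rho by (simp add: d4_def)
  have ex: "\<exists>u X Y \<Theta>. feasible \<rho> r x0 y0 \<theta>0 (t1 + d2 + d3 + d4) u X Y \<Theta>"
  proof (rule lrlr_feasible[OF rho _ _ _ _ _ _ _ _ _ _ _, where ?\<psi>1.0 = \<phi>1 and ?\<psi>2.0 = "\<phi>2 + \<tau>"
          and ?\<psi>3.0 = "\<theta>s - \<omega>" and ?\<psi>4.0 = "\<theta>s - \<omega> - \<beta>"])
    have cc: "L0 - 2 * \<i> * of_real \<rho> * cis \<phi>1 + 2 * \<i> * of_real \<rho> * cis (\<phi>2 + \<tau>) = c'"
    proof -
      have "L0 - 2 * \<i> * of_real \<rho> * cis \<phi>1 = c0 - 2 * \<i> * of_real \<rho> * cis \<phi>2" using hc' by (simp add: algebra_simps)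
      then show ?thesis by (simp add: c'_def cpr_def V_def cis_mult[symmetric] algebra_simps)
    qed
    show "Complex x0 y0 + \<i> * of_real \<rho> * cis \<theta>0 - 2 * \<i> * of_real \<rho> * cis \<phi>1 + 2 * \<i> * of_real \<rho> * cis (\<phi>2 + \<tau>)
          - 2 * \<i> * of_real \<rho> * cis (\<theta>s - \<omega>) + \<i> * of_real \<rho> * cis (\<theta>s - \<omega> - \<beta>)
          = - of_real r * \<i> * cis (\<theta>s - \<omega> - \<beta>)"
      unfolding L0_def[symmetric] unfolding lrlr_combine[OF cc] by (rule TL(1))
    show "\<phi>2 + \<tau> = \<phi>1 - d2 / \<rho>" using rho by (simp add: \<phi>2_def d2_def diff_divide_distrib)
    show "\<theta>s - \<omega> = \<phi>2 + \<tau> + d3 / \<rho>" using rho by (simp add: \<theta>s_def d3_def \<phi>f_def)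
    show "\<theta>s - \<omega> - \<beta> = \<theta>s - \<omega> - d4 / \<rho>" using rho by (simp add: d4_def)
  qed (use t d2p d3p d4p rr in \<open>auto simp: \<phi>1_def\<close>)
  then obtain u X Y \<Theta> where "feasible \<rho> r x0 y0 \<theta>0 (t1 + d2 + d3 + d4) u X Y \<Theta>" by blast
  moreover have "t1 + d2 + d3 + d4 < tf"
  proof -
    have e: "\<rho> * \<alpha>3 = tf - t2" using rho by (simp add: \<alpha>3_def)
    have "t1 + d2 + d3 + d4 = t2 + \<rho> * \<alpha>3 - 2 * (\<rho> * \<tau>) + \<rho> * \<delta> - \<rho> * (\<omega> - \<beta>)"
      by (simp add: d2_def d3_def d4_def algebra_simps)
    moreover have "- (\<rho> * \<tau>) \<le> \<rho> * \<bar>\<tau>\<bar>" using rho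
      by (metis abs_ge_minus_self abs_mult abs_of_pos minus_mult_right mult_left_mono less_imp_le)
    moreover have "\<rho> * \<delta> \<le> \<rho> * \<bar>\<delta>\<bar>" using rho by (intro mult_left_mono) auto
    ultimately show ?thesis using g(8) e by linarith
  qed
  ultimately show ?thesis by blast
qed



lemma caseD:
  fixes \<rho> r x0 y0 \<theta>0 tf t1 t2 :: real
  assumes rr: "\<rho> > r" "r > 0" and t: "0 < t1" "t1 < t2" "t2 < tf"
    and hc: "Complex x0 y0 + \<i> * of_real \<rho> * cis \<theta>0 - 2 * \<i> * of_real \<rho> * cis (\<theta>0 + t1 / \<rho>)
           + 2 * \<i> * of_real \<rho> * cis (\<theta>0 + t1 / \<rho> - (t2 - t1) / \<rho>)
         = \<i> * of_real (\<rho> - r) * cis (\<theta>0 + t1 / \<rho> - (t2 - t1) / \<rho> + (tf - t2) / \<rho>)"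
    and D0: "tf - t2 = pi * \<rho>" and D1: "t2 - t1 < 2 * pi * \<rho>" and D2: "t2 - t1 \<noteq> pi * \<rho>"
  shows "\<exists>T u X Y \<Theta>. feasible \<rho> r x0 y0 \<theta>0 T u X Y \<Theta> \<and> T < tf"
proof -
  have rho: "\<rho> > 0" using rr by linarith
  define \<phi>1 where "\<phi>1 = \<theta>0 + t1 / \<rho>"
  define \<alpha>2 where "\<alpha>2 = (t2 - t1) / \<rho>"
  define \<phi>2 where "\<phi>2 = \<phi>1 - \<alpha>2"
  define \<phi>f where "\<phi>f = \<phi>2 + pi"
  define L0 where "L0 = Complex x0 y0 + \<i> * of_real \<rho> * cis \<theta>0"
  define c0 where "c0 = \<i> * of_real (\<rho> - r) * cis \<phi>f"
  have a3: "(tf - t2) / \<rho> = pi" using D0 rho by simp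
  have hc': "L0 - 2 * \<i> * of_real \<rho> * cis \<phi>1 + 2 * \<i> * of_real \<rho> * cis \<phi>2 = c0"
    using hc unfolding a3 by (simp add: L0_def \<phi>1_def \<phi>2_def \<phi>f_def \<alpha>2_def c0_def)
  have a2: "0 < \<alpha>2" "\<alpha>2 < 2 * pi" "\<alpha>2 \<noteq> pi"
    using t D1 D2 rho by (auto simp: \<alpha>2_def divide_less_eq field_simps)
  have cm: "cmod c0 = \<rho> - r" using rr by (simp add: c0_def norm_mult del: of_real_diff)
  define V where "V = cis \<phi>2 - cis \<phi>1"
  have B0: "Im (cnj c0 * \<i> * V) \<noteq> 0"
  proof -
    have "Im (cnj c0 * \<i> * V) = (\<rho> - r) * (sin (\<phi>2 - \<phi>f) - sin (\<phi>1 - \<phi>f))"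
      unfolding c0_def V_def by (rule im_cnj_prod2)
    also have "\<dots> = (\<rho> - r) * sin \<alpha>2"
    proof -
      have "\<phi>2 - \<phi>f = - pi" by (simp add: \<phi>f_def)
      moreover have "\<phi>1 - \<phi>f = \<alpha>2 - pi" by (simp add: \<phi>f_def \<phi>2_def)
      ultimately show ?thesis by (simp add: sin_diff)
    qed
    finally show ?thesis using sin_ne0[OF a2] rr by simp
  qed
  define E where "E = min (pi / 3) (t1 / \<rho>)"
  have E0: "E > 0" using t rho by (simp add: E_def)
  obtain \<tau> where g: "\<tau> \<noteq> 0" "\<bar>\<tau>\<bar> < E"
     "\<rho> - r < cmod (cpr \<rho> c0 V \<tau>)" "cmod (cpr \<rho> c0 V \<tau>) < \<rho> + r"
     "Re (cpr \<rho> c0 V \<tau> / c0) > 0"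
     "arccos (kom \<rho> r (cmod (cpr \<rho> c0 V \<tau>))) < E" "\<bar>dl c0 (cpr \<rho> c0 V \<tau>)\<bar> < E"
     "0 * \<bar>\<tau>\<bar> + \<rho> * \<bar>dl c0 (cpr \<rho> c0 V \<tau>)\<bar>
       < \<rho> * (arccos (kom \<rho> r (cmod (cpr \<rho> c0 V \<tau>))) - arccos (kbe \<rho> r (cmod (cpr \<rho> c0 V \<tau>))))"
    using gain[OF rr cm B0 E0, of 0] by auto
  define c' where "c' = cpr \<rho> c0 V \<tau>"
  define m where "m = cmod c'"
  define \<delta> where "\<delta> = dl c0 c'"
  define \<omega> where "\<omega> = arccos (kom \<rho> r m)"
  define \<beta> where "\<beta> = arccos (kbe \<rho> r m)"
  define \<theta>s where "\<theta>s = \<phi>f + \<delta>"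
  note g = g[folded c'_def, folded m_def, folded \<delta>_def \<omega>_def \<beta>_def]
  have dir: "\<i> * cis \<theta>s * of_real m = c'"
  proof -
    have "\<i> * cis \<phi>f * of_real (\<rho> - r) = c0" by (simp add: c0_def mult_ac)
    from delta_dir[OF this _ g(5)] rr show ?thesis by (simp add: \<theta>s_def \<delta>_def dl_def m_def)
  qed
  note TL = tail[OF rr m_def g(3) g(4) dir, folded \<omega>_def \<beta>_def]
  define d1 where "d1 = t1 + \<rho> * \<tau>"
  define d3 where "d3 = \<rho> * (pi + \<delta> - \<omega> - \<tau>)"
  define d4 where "d4 = \<rho> * \<beta>"
  have E1: "E \<le> pi / 3" "E \<le> t1 / \<rho>" unfolding E_def by (rule min.cobounded1, rule min.cobounded2)
  have d1p: "d1 > 0"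
  proof -
    have "\<rho> * \<bar>\<tau>\<bar> < \<rho> * (t1 / \<rho>)" using g(2) E1 rho by (intro mult_strict_left_mono) auto
    then have "\<rho> * \<bar>\<tau>\<bar> < t1" using rho by simp
    moreover have "- (\<rho> * \<tau>) \<le> \<rho> * \<bar>\<tau>\<bar>" using rho
      by (metis abs_ge_minus_self abs_mult abs_of_pos minus_mult_right mult_left_mono less_imp_le)
    ultimately show ?thesis by (simp add: d1_def)
  qed
  have d3p: "d3 > 0"
  proof -
    have "pi + \<delta> - \<omega> - \<tau> > 0" using g(2,6,7) E1 by linarith
    then show ?thesis using rho by (simp add: d3_def)
  qed
  have d4p: "d4 \<ge> 0" using TL(4) rho by (simp add: d4_def)
  have ex: "\<exists>u X Y \<Theta>. feasible \<rho> r x0 y0 \<theta>0 (d1 + (t2 - t1) + d3 + d4) u X Y \<Theta>"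
  proof (rule lrlr_feasible[OF rho _ _ _ _ _ _ _ _ _ _ _, where ?\<psi>1.0 = "\<phi>1 + \<tau>" and ?\<psi>2.0 = "\<phi>2 + \<tau>"
          and ?\<psi>3.0 = "\<theta>s - \<omega>" and ?\<psi>4.0 = "\<theta>s - \<omega> - \<beta>"])
    have cc: "L0 - 2 * \<i> * of_real \<rho> * cis (\<phi>1 + \<tau>) + 2 * \<i> * of_real \<rho> * cis (\<phi>2 + \<tau>) = c'"
    proof -
      have "L0 = c0 + 2 * \<i> * of_real \<rho> * cis \<phi>1 - 2 * \<i> * of_real \<rho> * cis \<phi>2" using hc' by (simp add: algebra_simps)
      then show ?thesis by (simp add: c'_def cpr_def V_def cis_mult[symmetric] algebra_simps)
    qed
    show "Complex x0 y0 + \<i> * of_real \<rho> * cis \<theta>0 - 2 * \<i> * of_real \<rho> * cis (\<phi>1 + \<tau>) + 2 * \<i> * of_real \<rho> * cis (\<phi>2 + \<tau>)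
          - 2 * \<i> * of_real \<rho> * cis (\<theta>s - \<omega>) + \<i> * of_real \<rho> * cis (\<theta>s - \<omega> - \<beta>)
          = - of_real r * \<i> * cis (\<theta>s - \<omega> - \<beta>)"
      unfolding L0_def[symmetric] unfolding lrlr_combine[OF cc] by (rule TL(1))
    show "\<phi>1 + \<tau> = \<theta>0 + d1 / \<rho>" using rho by (simp add: \<phi>1_def d1_def add_divide_distrib)
    show "\<phi>2 + \<tau> = \<phi>1 + \<tau> - (t2 - t1) / \<rho>" by (simp add: \<phi>2_def \<alpha>2_def)
    show "\<theta>s - \<omega> = \<phi>2 + \<tau> + d3 / \<rho>" using rho by (simp add: \<theta>s_def d3_def \<phi>f_def)
    show "\<theta>s - \<omega> - \<beta> = \<theta>s - \<omega> - d4 / \<rho>" using rho by (simp add: d4_def)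
  qed (use t d1p d3p d4p rr in auto)
  then obtain u X Y \<Theta> where "feasible \<rho> r x0 y0 \<theta>0 (d1 + (t2 - t1) + d3 + d4) u X Y \<Theta>" by blast
  moreover have "d1 + (t2 - t1) + d3 + d4 < tf"
  proof -
    have "d1 + (t2 - t1) + d3 + d4 = t2 + \<rho> * pi + \<rho> * \<delta> - \<rho> * (\<omega> - \<beta>)"
      by (simp add: d1_def d3_def d4_def algebra_simps)
    moreover have "\<rho> * \<delta> \<le> \<rho> * \<bar>\<delta>\<bar>" using rho by (intro mult_left_mono) auto
    moreover have "\<rho> * pi = tf - t2" using D0 by simp
    ultimately show ?thesis using g(8) by linarith
  qed
  ultimately show ?thesis by blast
qed



lemma caseE:
  fixes \<rho> r x0 y0 \<theta>0 tf t1 t2 :: real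
  assumes rr: "\<rho> > r" "r > 0" and t: "0 < t1" "t1 < t2" "t2 < tf"
    and hc: "Complex x0 y0 + \<i> * of_real \<rho> * cis \<theta>0 - 2 * \<i> * of_real \<rho> * cis (\<theta>0 + t1 / \<rho>)
           + 2 * \<i> * of_real \<rho> * cis (\<theta>0 + t1 / \<rho> - (t2 - t1) / \<rho>)
         = \<i> * of_real (\<rho> - r) * cis (\<theta>0 + t1 / \<rho> - (t2 - t1) / \<rho> + (tf - t2) / \<rho>)"
    and E1: "tf - t2 = pi * \<rho>" and E2: "t2 - t1 = pi * \<rho>"
  shows "\<exists>T u X Y \<Theta>. feasible \<rho> r x0 y0 \<theta>0 T u X Y \<Theta> \<and> T < tf"
proof -
  have rho: "\<rho> > 0" using rr by linarith
  define \<phi>1 where "\<phi>1 = \<theta>0 + t1 / \<rho>"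
  define C where "C = cis \<phi>1"
  define L0 where "L0 = Complex x0 y0 + \<i> * of_real \<rho> * cis \<theta>0"
  have p1: "(tf - t2) / \<rho> = pi" "(t2 - t1) / \<rho> = pi" using E1 E2 rho by simp_all
  have cm: "cis (\<phi>1 - pi) = - C"
  proof -
    have "cis (\<phi>1 - pi) = cis \<phi>1 * cis (- pi)" by (simp only: cis_mult diff_conv_add_uminus)
    moreover have "cis (- pi) = - 1" by (simp add: complex_eq_iff)
    ultimately show ?thesis by (simp add: C_def)
  qed
  have hc': "L0 - 2 * \<i> * of_real \<rho> * C + 2 * \<i> * of_real \<rho> * (- C) = \<i> * of_real (\<rho> - r) * C"
    using hc unfolding p1 by (simp add: L0_def \<phi>1_def[symmetric] cm[unfolded C_def] C_def)
  then have L0e: "L0 = \<i> * of_real (5 * \<rho> - r) * C" by (simp add: algebra_simps)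
  have ch: "cis (\<phi>1 - pi / 2) = - \<i> * C"
  proof -
    have h1: "cis (\<phi>1 - pi / 2) = cis \<phi>1 * cis (- (pi / 2))" by (simp only: cis_mult diff_conv_add_uminus)
    have h2: "cis (- (pi / 2)) = - \<i>" by (simp add: complex_eq_iff)
    show ?thesis unfolding h1 h2 C_def by simp
  qed
  have ex: "\<exists>u X Y \<Theta>. feasible \<rho> r x0 y0 \<theta>0 (t1 + pi * \<rho> / 2 + (2 * \<rho> - 2 * r) + pi * \<rho> / 2) u X Y \<Theta>"
  proof (rule mk_feasible2[OF rho _ _ _ _ _ _ _ _ _ _ _ _ _ refl, where ?v1.0 = 1 and ?v2.0 = "-1" and ?v3.0 = 0
        and ?v4.0 = "-1" and ?\<psi>1.0 = \<phi>1 and ?\<psi>2.0 = "\<phi>1 - pi / 2" and ?\<psi>3.0 = "\<phi>1 - pi / 2"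
        and ?\<psi>4.0 = "\<phi>1 - pi"])
    define zf where "zf = Complex x0 y0 + (arc_d \<rho> \<theta>0 1 t1 + arc_d \<rho> \<phi>1 (- 1) (pi * \<rho> / 2) +
           arc_d \<rho> (\<phi>1 - pi / 2) 0 (2 * \<rho> - 2 * r) + arc_d \<rho> (\<phi>1 - pi / 2) (- 1) (pi * \<rho> / 2))"
    have a1: "arc_d \<rho> \<theta>0 1 t1 = - \<i> * of_real \<rho> * (C - cis \<theta>0)" using rho by (simp add: arc_d_def C_def \<phi>1_def)
    have a2: "arc_d \<rho> \<phi>1 (- 1) (pi * \<rho> / 2) = \<i> * of_real \<rho> * (- \<i> * C - C)"
      using rho ch by (simp add: arc_d_def C_def)
    have a3: "arc_d \<rho> (\<phi>1 - pi / 2) 0 (2 * \<rho> - 2 * r) = of_real (2 * \<rho> - 2 * r) * (- \<i> * C)"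
      using ch by (simp add: arc_d_def)
    have a4: "arc_d \<rho> (\<phi>1 - pi / 2) (- 1) (pi * \<rho> / 2) = \<i> * of_real \<rho> * (- C - (- \<i> * C))"
    proof -
      have "\<phi>1 - pi / 2 + - 1 * (pi * \<rho> / 2) / \<rho> = \<phi>1 - pi" using rho by simp
      then show ?thesis using rho ch cm by (simp add: arc_d_def C_def)
    qed
    have "zf = L0 - \<i> * of_real \<rho> * C + \<i> * of_real \<rho> * (- \<i> * C - C) + of_real (2 * \<rho> - 2 * r) * (- \<i> * C)
              + \<i> * of_real \<rho> * (- C - (- \<i> * C))"
      unfolding zf_def a1 a2 a3 a4 L0_def by (simp add: algebra_simps)
    also have "\<dots> = of_real (- r) * \<i> * (- C)" unfolding L0e by (simp add: algebra_simps)
    finally have "zf = of_real (- r) * \<i> * cis (\<phi>1 - pi)" using cm by simp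
    note M = M_of[OF this, of r]
    show "(Re zf)\<^sup>2 + (Im zf)\<^sup>2 = r\<^sup>2" using M rr by simp
    show "Re zf * cos (\<phi>1 - pi) + Im zf * sin (\<phi>1 - pi) = 0" using M rr by simp
    show "0 < t1 + pi * \<rho> / 2 + (2 * \<rho> - 2 * r) + pi * \<rho> / 2"
      using t rr mult_pos_pos[OF pi_gt_zero rho] by linarith
  qed (use t rho rr mult_pos_pos[OF pi_gt_zero rho] in \<open>auto simp: \<phi>1_def\<close>)
  then obtain u X Y \<Theta> where "feasible \<rho> r x0 y0 \<theta>0 (t1 + pi * \<rho> / 2 + (2 * \<rho> - 2 * r) + pi * \<rho> / 2) u X Y \<Theta>" by blast
  moreover have "t1 + pi * \<rho> / 2 + (2 * \<rho> - 2 * r) + pi * \<rho> / 2 < tf"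
  proof -
    have "3 * \<rho> < pi * \<rho>" using pi_gt3 rho by (intro mult_strict_right_mono) auto
    then show ?thesis using E1 E2 rr by linarith
  qed
  ultimately show ?thesis by blast
qed



lemma core:
  fixes \<rho> r x0 y0 \<theta>0 tf t1 t2 :: real and u X Y \<Theta> :: "real \<Rightarrow> real"
  assumes rr: "\<rho> > r" "r > 0" and F: "feasible \<rho> r x0 y0 \<theta>0 tf u X Y \<Theta>"
    and C: "CCC_control 1 t1 t2 tf u"
    and N: "norm (turn_center \<rho> 1 (X tf) (Y tf) (\<Theta> tf)) = \<rho> - r"
  shows "\<exists>T u X Y \<Theta>. feasible \<rho> r x0 y0 \<theta>0 T u X Y \<Theta> \<and> T < tf"
proof -
  from C have t: "0 < t1" "t1 < t2" "t2 < tf" unfolding CCC_control_def by auto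
  note hc = orig_setup[OF rr F C N]
  show ?thesis
  proof (cases "tf - t2 \<ge> 2 * pi * \<rho>")
    case True
    then show ?thesis by (rule caseA[OF rr t hc])
  next
    case nA: False
    show ?thesis
    proof (cases "t2 - t1 \<ge> 2 * pi * \<rho>")
      case True
      then show ?thesis by (rule caseB[OF rr t hc])
    next
      case nB: False
      show ?thesis
      proof (cases "tf - t2 = pi * \<rho>")
        case False
        then show ?thesis using nA by (intro caseC[OF rr t hc]) auto
      next
        case E1: True
        show ?thesis
        proof (cases "t2 - t1 = pi * \<rho>")
          case False
          then show ?thesis using nB E1 by (intro caseD[OF rr t hc]) auto
        next
          case True
          then show ?thesis using E1 by (intro caseE[OF rr t hc]) auto
        qed
      qed
    qed
  qed
qed

lemma reflect_feasible:
  assumes "feasible \<rho> r x0 y0 \<theta>0 T u X Y \<Theta>"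
  shows "feasible \<rho> r x0 (- y0) (- \<theta>0) T (\<lambda>t. - u t) X (\<lambda>t. - Y t) (\<lambda>t. - \<Theta> t)"
proof -
  from assms have adm: "admissible \<rho> x0 y0 \<theta>0 T u X Y \<Theta>"
    and M1: "(X T)\<^sup>2 + (Y T)\<^sup>2 = r\<^sup>2" and M2: "X T * cos (\<Theta> T) + Y T * sin (\<Theta> T) = 0"
    unfolding feasible_def by auto
  have adm': "admissible \<rho> x0 (- y0) (- \<theta>0) T (\<lambda>t. - u t) X (\<lambda>t. - Y t) (\<lambda>t. - \<Theta> t)"
    using adm unfolding admissible_def by (auto simp: integrable_neg)
  have M1': "(X T)\<^sup>2 + (- Y T)\<^sup>2 = r\<^sup>2" using M1 by simp
  have M2': "X T * cos (- \<Theta> T) + (- Y T) * sin (- \<Theta> T) = 0" using M2 by simp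
  show ?thesis unfolding feasible_def using adm' M1' M2' by simp
qed

theorem lemma5:
  fixes \<rho> r x0 y0 \<theta>0 tf t1 t2 s :: real
    and u X Y \<Theta> :: "real \<Rightarrow> real"
  assumes "\<rho> > r" and "r > 0" and "\<theta>0 \<in> {0..2*pi}"
    and "feasible \<rho> r x0 y0 \<theta>0 tf u X Y \<Theta>"
    and "CCC_control s t1 t2 tf u"
    and "norm (turn_center \<rho> s (X tf) (Y tf) (\<Theta> tf)) = \<rho> - r"
  shows "\<not> optimal \<rho> r x0 y0 \<theta>0 tf u X Y \<Theta>"
proof
  assume opt: "optimal \<rho> r x0 y0 \<theta>0 tf u X Y \<Theta>"
  have rr: "\<rho> > r" "r > 0" using assms by auto
  have s: "s = 1 \<or> s = -1" using assms(5) unfolding CCC_control_def by auto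
  have "\<exists>T u X Y \<Theta>. feasible \<rho> r x0 y0 \<theta>0 T u X Y \<Theta> \<and> T < tf"
  proof (cases "s = 1")
    case True
    then show ?thesis using core[OF rr assms(4)] assms(5,6) by simp
  next
    case False
    then have sm: "s = -1" using s by simp
    have F': "feasible \<rho> r x0 (- y0) (- \<theta>0) tf (\<lambda>t. - u t) X (\<lambda>t. - Y t) (\<lambda>t. - \<Theta> t)"
      by (rule reflect_feasible[OF assms(4)])
    have C': "CCC_control 1 t1 t2 tf (\<lambda>t. - u t)"
      using assms(5) sm unfolding CCC_control_def by auto
    have N': "norm (turn_center \<rho> 1 (X tf) (- Y tf) (- \<Theta> tf)) = \<rho> - r"
    proof -
      have e: "- Y tf + \<rho> * cos (\<Theta> tf) = - (Y tf - \<rho> * cos (\<Theta> tf))" by simp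
      have e2: "(\<rho> * cos (\<Theta> tf) - Y tf)\<^sup>2 = (Y tf - \<rho> * cos (\<Theta> tf))\<^sup>2"
        by (simp add: power2_eq_square algebra_simps)
      show ?thesis using assms(6) sm by (simp add: turn_center_def norm_Pair e2)
    qed
    obtain T u' X' Y' \<Theta>' where G: "feasible \<rho> r x0 (- y0) (- \<theta>0) T u' X' Y' \<Theta>'" "T < tf"
      using core[OF rr F' C' N'] by blast
    have "feasible \<rho> r x0 (- (- y0)) (- (- \<theta>0)) T (\<lambda>t. - u' t) X' (\<lambda>t. - Y' t) (\<lambda>t. - \<Theta>' t)"
      by (rule reflect_feasible[OF G(1)])
    then have "feasible \<rho> r x0 y0 \<theta>0 T (\<lambda>t. - u' t) X' (\<lambda>t. - Y' t) (\<lambda>t. - \<Theta>' t)" by simp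
    then show ?thesis using G(2) by blast
  qed
  then obtain T u' X' Y' \<Theta>' where G: "feasible \<rho> r x0 y0 \<theta>0 T u' X' Y' \<Theta>'" "T < tf" by blast
  from opt have "tf \<le> T" using G(1) unfolding optimal_def by blast
  then show False using G(2) by simp
qed


end
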